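(* In the setting described in the context, for every integer $n\geq1$ all zeros of the monic orthogonal section $\pi_n$ are simple.
   Context: Let $\tau\in i\mathbb{R}_{>0}$, $\Lambda_\tau=\mathbb{Z}+\tau\mathbb{Z}$ and $\mathcal E_\tau=\mathbb{C}/\Lambda_\tau$, with $p$ the coordinate inherited from $\mathbb{C}$. Let $\gamma\subset\mathcal E_\tau$ be the image of the line $\{\mathrm{Im}\,p=\tfrac12\mathrm{Im}\,\tau\}$, parametrized as $p=\tfrac\tau2+s$, $s\in[0,1]$, oriented by increasing $s$. Fix $\mathscr D\in(0,1)$ (a point of $\mathcal E_\tau$). Let $w$ be analytic in a strip containing $\gamma$ and real-valued on $\gamma$, giving the positive measure ${\rm e}^{w(p)}\mathrm dp$ on $\gamma$. For $n\geq0$ let $\mathscr P_n$ be the space of meromorphic functions on $\mathcal E_\tau$ whose only possible poles are of order at most $n$ at $p\equiv0$ and at most simple at $p\equiv\mathscr D$. The monic orthogonal section $\pi_n$ ($n\geq1$) is the element of $\mathscr P_n$ with $\pi_n(p)=p^{-n}(1+\mathcal O(p))$ as $p\to0$ and $\int_\gamma\pi_n f\,{\rm e}^{w}\mathrm dp=0$ for all $f\in\mathscr P_{n-1}$ (it exists). *)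

theory Defs
  imports "HOL-Complex_Analysis.Complex_Analysis" "HOL-Library.Landau_Symbols"
begin

definition lattice :: "complex \<Rightarrow> complex set" where
  "lattice \<tau> = {of_int m + of_int k * \<tau> | m k. True}"

text \<open>Allowed pole set: lattice points (p = 0 on the torus) and translates of D.\<close>
definition pole_set :: "complex \<Rightarrow> real \<Rightarrow> complex set" where
  "pole_set \<tau> d = lattice \<tau> \<union> ((\<lambda>l. complex_of_real d + l) ` lattice \<tau>)"

definition pole_order_le :: "(complex \<Rightarrow> complex) \<Rightarrow> complex \<Rightarrow> nat \<Rightarrow> bool" where
  "pole_order_le f a n \<longleftrightarrow> (\<exists>r>0. \<exists>g. g holomorphic_on ball a r \<and>
       (\<forall>z\<in>ball a r - {a}. f z = g z / (z - a) ^ n))"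

text \<open>The space P_n of meromorphic functions on the torus C/(Z+tau Z) with poles of order
  at most n at p = 0 and at most simple at p = D; represented by doubly periodic functions on C.\<close>
definition sec_space :: "complex \<Rightarrow> real \<Rightarrow> nat \<Rightarrow> (complex \<Rightarrow> complex) \<Rightarrow> bool" where
  "sec_space \<tau> d n f \<longleftrightarrow>
     (\<forall>z. z \<notin> pole_set \<tau> d \<longrightarrow> f (z + 1) = f z \<and> f (z + \<tau>) = f z) \<and>
     f holomorphic_on (- pole_set \<tau> d) \<and>
     (\<forall>l\<in>lattice \<tau>. pole_order_le f l n) \<and>
     (\<forall>l\<in>lattice \<tau>. pole_order_le f (complex_of_real d + l) 1)"

definition is_zero_at :: "(complex \<Rightarrow> complex) \<Rightarrow> complex \<Rightarrow> bool" where
  "is_zero_at f z \<longleftrightarrow> (f \<longlongrightarrow> 0) (at z)"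

definition simple_zero_at :: "(complex \<Rightarrow> complex) \<Rightarrow> complex \<Rightarrow> bool" where
  "simple_zero_at f z \<longleftrightarrow> (\<exists>r>0. \<exists>g. g holomorphic_on ball z r \<and> g z \<noteq> 0 \<and>
       (\<forall>u\<in>ball z r - {z}. f u = (u - z) * g u))"

end

theory Submission
  imports Defs
begin

definition kap :: "complex \<Rightarrow> complex" where "kap Y = Y / (Y - 1)^2"
definition lp :: "complex \<Rightarrow> complex" where "lp Y = 1 / (Y - 1)"
definition lm :: "complex \<Rightarrow> complex" where "lm Y = Y / (Y - 1)"

definition BP :: "(complex \<Rightarrow> complex) \<Rightarrow> bool" where
  "BP \<rho> \<longleftrightarrow> (\<forall>Y. 2 \<le> norm Y \<longrightarrow> norm (\<rho> Y) \<le> 4 / norm Y)"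
definition BM :: "(complex \<Rightarrow> complex) \<Rightarrow> bool" where
  "BM \<rho> \<longleftrightarrow> (\<forall>Y. norm Y \<le> 1/2 \<longrightarrow> norm (\<rho> Y) \<le> 4 * norm Y)"
definition HO :: "(complex \<Rightarrow> complex) \<Rightarrow> bool" where
  "HO \<rho> \<longleftrightarrow> (\<forall>Y. Y \<noteq> 1 \<longrightarrow> \<rho> field_differentiable at Y)"

lemma norm_minus1_ge: "norm (Y::complex) - 1 \<le> norm (Y - 1)"
  by (metis norm_one norm_triangle_ineq2)
lemma norm_minus1_ge': "1 - norm (Y::complex) \<le> norm (Y - 1)"
  by (metis norm_minus_commute norm_one norm_triangle_ineq2)

lemma BP_kap: "BP kap"
  unfolding BP_def kap_def
proof (intro allI impI)
  fix Y :: complex assume Y: "2 \<le> norm Y"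
  have h: "norm Y / 2 \<le> norm (Y - 1)" using norm_minus1_ge[of Y] Y by linarith
  have "norm (Y / (Y - 1)^2) = norm Y / norm (Y - 1)^2" by (simp add: norm_divide norm_power)
  also have "\<dots> \<le> norm Y / (norm Y / 2)^2"
    using Y h by (intro divide_left_mono power_mono mult_pos_pos) (auto intro!: mult_pos_pos)
  also have "\<dots> = 4 / norm Y" using Y by (simp add: power2_eq_square field_simps)
  finally show "norm (Y / (Y - 1)^2) \<le> 4 / norm Y" .
qed

lemma BM_kap: "BM kap"
  unfolding BM_def kap_def
proof (intro allI impI)
  fix Y :: complex assume Y: "norm Y \<le> 1/2"
  have h: "1/2 \<le> norm (Y - 1)" using norm_minus1_ge'[of Y] Y by linarith
  have "norm (Y / (Y - 1)^2) = norm Y / norm (Y - 1)^2" by (simp add: norm_divide norm_power)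
  also have "\<dots> \<le> norm Y / (1/2)^2"
    using Y h by (intro divide_left_mono power_mono) (auto intro!: mult_pos_pos)
  also have "\<dots> = 4 * norm Y" by (simp add: power2_eq_square)
  finally show "norm (Y / (Y - 1)^2) \<le> 4 * norm Y" .
qed

lemma BP_lp: "BP lp"
  unfolding BP_def lp_def
proof (intro allI impI)
  fix Y :: complex assume Y: "2 \<le> norm Y"
  have h: "norm Y / 2 \<le> norm (Y - 1)" using norm_minus1_ge[of Y] Y by linarith
  have "norm (1 / (Y - 1)) = 1 / norm (Y - 1)" by (simp add: norm_divide)
  also have "\<dots> \<le> 1 / (norm Y / 2)"
    using Y h by (intro divide_left_mono) (auto intro!: mult_pos_pos)
  also have "\<dots> \<le> 4 / norm Y" using Y by (simp add: divide_right_mono)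
  finally show "norm (1 / (Y - 1)) \<le> 4 / norm Y" .
qed

lemma BM_lm: "BM lm"
  unfolding BM_def lm_def
proof (intro allI impI)
  fix Y :: complex assume Y: "norm Y \<le> 1/2"
  have h: "1/2 \<le> norm (Y - 1)" using norm_minus1_ge'[of Y] Y by linarith
  have "norm (Y / (Y - 1)) = norm Y / norm (Y - 1)" by (simp add: norm_divide)
  also have "\<dots> \<le> norm Y / (1/2)"
    using Y h by (intro divide_left_mono) auto
  also have "\<dots> \<le> 4 * norm Y" by simp
  finally show "norm (Y / (Y - 1)) \<le> 4 * norm Y" .
qed

lemma HO_I: assumes "\<rho> holomorphic_on -{1}" shows "HO \<rho>"
  unfolding HO_def using assms
  by (metis ComplI holomorphic_on_imp_differentiable_at open_Compl open_delete open_UNIV singletonD Compl_eq_Diff_UNIV closed_singleton)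

lemma HO_kap: "HO kap"
  by (rule HO_I) (unfold kap_def, auto intro!: holomorphic_intros)
lemma HO_lp: "HO lp"
  by (rule HO_I) (unfold lp_def, auto intro!: holomorphic_intros)
lemma HO_lm: "HO lm"
  by (rule HO_I) (unfold lm_def, auto intro!: holomorphic_intros)

lemma series_holo_ball:
  fixes g :: "nat \<Rightarrow> complex \<Rightarrow> complex"
  assumes hol: "\<And>k. g k holomorphic_on ball x r"
    and bd: "\<And>k u. u \<in> ball x r \<Longrightarrow> norm (g k u) \<le> M k"
    and sM: "summable M"
  shows "(\<lambda>u. \<Sum>k. g k u) holomorphic_on ball x r"
proof (rule holomorphic_uniform_sequence[where f = "\<lambda>n u. \<Sum>k<n. g k u"])
  show "open (ball x r)" by simp
  show "\<And>n. (\<lambda>u. \<Sum>k<n. g k u) holomorphic_on ball x r"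
    using hol by (intro holomorphic_intros) auto
  fix y assume y: "y \<in> ball x r"
  define d where "d = (r - dist x y) / 2"
  have d: "0 < d" using y by (simp add: d_def)
  have sub: "cball y d \<subseteq> ball x r"
  proof
    fix u assume "u \<in> cball y d"
    then have "dist y u \<le> d" by simp
    moreover have "dist x u \<le> dist x y + dist y u" by (rule dist_triangle)
    ultimately show "u \<in> ball x r" using y by (simp add: d_def)
  qed
  have "uniform_limit (cball y d) (\<lambda>n u. \<Sum>k<n. g k u) (\<lambda>u. \<Sum>k. g k u) sequentially"
    by (rule Weierstrass_m_test[OF _ sM]) (use bd sub in blast)
  then show "\<exists>d>0. cball y d \<subseteq> ball x r \<and> uniform_limit (cball y d) (\<lambda>n u. \<Sum>k<n. g k u) (\<lambda>u. \<Sum>k. g k u) sequentially"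
    using d sub by blast
qed

definition Sp :: "(complex \<Rightarrow> complex) \<Rightarrow> real \<Rightarrow> complex \<Rightarrow> complex" where
  "Sp \<rho> Q X = (\<Sum>k. \<rho> (X * of_real Q ^ k))"
definition Sm :: "(complex \<Rightarrow> complex) \<Rightarrow> real \<Rightarrow> complex \<Rightarrow> complex" where
  "Sm \<rho> Q X = (\<Sum>k. \<rho> (X / of_real Q ^ Suc k))"

lemma normXQ: "Q > 0 \<Longrightarrow> norm (X * complex_of_real Q ^ k) = norm X * Q ^ k"
  by (simp add: norm_mult norm_power)
lemma normXQ': "Q > 0 \<Longrightarrow> norm (X / complex_of_real Q ^ k) = norm X / Q ^ k"
  by (simp add: norm_divide norm_power)

lemma Sp_bound:
  assumes Q: "Q > 1" and B: "BP \<rho>" and a: "a > 0" and X: "norm X \<ge> a" and N: "2 \<le> a * Q ^ N"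
  shows "norm (\<rho> (X * of_real Q ^ (k + N))) \<le> (4 / (a * Q ^ N)) * (1 / Q) ^ k"
proof -
  have QN: "Q ^ N \<le> Q ^ (k + N)" using Q by (simp add: power_increasing)
  have "a * Q ^ N \<le> norm X * Q ^ (k + N)"
    using X QN a Q by (intro mult_mono) auto
  then have ge: "2 \<le> norm (X * of_real Q ^ (k + N))" using N Q by (simp add: normXQ)
  have "norm (\<rho> (X * of_real Q ^ (k + N))) \<le> 4 / norm (X * of_real Q ^ (k + N))"
    using B ge unfolding BP_def by blast
  also have "\<dots> = 4 / (norm X * Q ^ (k + N))" using Q by (simp add: normXQ)
  also have "\<dots> \<le> 4 / (a * Q ^ (k + N))"
    using X a Q by (intro divide_left_mono mult_right_mono mult_pos_pos) auto
  also have "\<dots> = (4 / (a * Q ^ N)) * (1 / Q) ^ k"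
    using Q a by (simp add: power_add field_simps)
  finally show ?thesis .
qed

lemma Sm_bound:
  assumes Q: "Q > 1" and B: "BM \<rho>" and X: "norm X \<le> a" and N: "2 * a \<le> Q ^ N"
  shows "norm (\<rho> (X / of_real Q ^ Suc (k + N))) \<le> (4 * a / Q ^ Suc N) * (1 / Q) ^ k"
proof -
  have a0: "0 \<le> a" using X norm_ge_zero order_trans by blast
  have QN: "Q ^ N \<le> Q ^ Suc (k + N)" using Q by (intro power_increasing) auto
  have "norm X / Q ^ Suc (k + N) \<le> a / Q ^ N"
    using X QN Q a0 by (intro frac_le) auto
  also have "\<dots> \<le> 1/2" using N Q by (simp add: field_simps)
  finally have le: "norm (X / of_real Q ^ Suc (k + N)) \<le> 1/2" using Q by (simp add: normXQ' del: power_Suc)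
  have "norm (\<rho> (X / of_real Q ^ Suc (k + N))) \<le> 4 * norm (X / of_real Q ^ Suc (k + N))"
    using B le unfolding BM_def by blast
  also have "\<dots> = 4 * (norm X / Q ^ Suc (k + N))" using Q by (simp add: normXQ' del: power_Suc)
  also have "\<dots> \<le> 4 * (a / Q ^ Suc (k + N))"
    using X Q by (intro mult_left_mono divide_right_mono) auto
  also have "\<dots> = (4 * a / Q ^ Suc N) * (1 / Q) ^ k"
    using Q by (simp add: power_add field_simps)
  finally show ?thesis .
qed

lemma geom_summable: fixes Q C :: real assumes "Q > 1" shows "summable (\<lambda>k. C * (1 / Q) ^ k)"
proof -
  have "summable (\<lambda>k. (1 / Q) ^ k)" by (rule summable_geometric) (use assms in simp)
  then show ?thesis by (rule summable_mult)
qed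

lemma Sp_summable:
  assumes Q: "Q > 1" and B: "BP \<rho>" and X: "X \<noteq> 0"
  shows "summable (\<lambda>k. \<rho> (X * of_real Q ^ k))"
proof -
  obtain N where N: "2 / norm X < Q ^ N" using real_arch_pow[OF Q] by blast
  have N': "2 \<le> norm X * Q ^ N" using N X by (simp add: field_simps)
  have "summable (\<lambda>k. \<rho> (X * of_real Q ^ (k + N)))"
    by (rule summable_comparison_test'[OF geom_summable[OF Q, of "4 / (norm X * Q ^ N)"]])
       (rule Sp_bound[OF Q B _ _ N'], use X in auto)
  then show ?thesis using summable_iff_shift[of "\<lambda>k. \<rho> (X * of_real Q ^ k)" N] by simp
qed

lemma Sm_summable:
  assumes Q: "Q > 1" and B: "BM \<rho>"
  shows "summable (\<lambda>k. \<rho> (X / of_real Q ^ Suc k))"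
proof -
  obtain N where N: "2 * norm X < Q ^ N" using real_arch_pow[OF Q] by blast
  have "summable (\<lambda>k. \<rho> (X / of_real Q ^ Suc (k + N)))"
    by (rule summable_comparison_test'[OF geom_summable[OF Q, of "4 * norm X / Q ^ Suc N"]])
       (rule Sm_bound[OF Q B], use N in auto)
  then show ?thesis using summable_iff_shift[of "\<lambda>k. \<rho> (X / of_real Q ^ Suc k)" N]
    by (simp add: add.commute)
qed

lemma fd_mult_const: fixes c X0 :: complex
  assumes "\<rho> field_differentiable at (X0 * c)"
  shows "(\<lambda>X. \<rho> (X * c)) field_differentiable at X0"
proof -
  have "((\<lambda>X::complex. X * c) has_field_derivative c) (at X0)"
    by (auto intro!: derivative_eq_intros)
  then have "(\<lambda>X::complex. X * c) field_differentiable at X0"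
    unfolding field_differentiable_def by blast
  from field_differentiable_compose[OF this, of \<rho>] assms show ?thesis by (simp add: o_def)
qed

lemma fd_div_const: fixes c X0 :: complex
  assumes "\<rho> field_differentiable at (X0 / c)"
  shows "(\<lambda>X. \<rho> (X / c)) field_differentiable at X0"
  using fd_mult_const[of \<rho> X0 "1 / c"] assms by simp

lemma fd_at_within: "f field_differentiable at x \<Longrightarrow> f field_differentiable at x within S"
  using field_differentiable_at_within by blast

lemma ball_norm_ge: assumes "X \<in> ball X0 (norm X0 / 2)" shows "norm X \<ge> norm X0 / 2"
proof -
  have "norm X0 - norm X \<le> norm (X0 - X)" by (rule norm_triangle_ineq2)
  moreover have "norm (X0 - X) < norm X0 / 2" using assms by (simp add: dist_norm)
  ultimately show ?thesis by linarith
qed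

lemma ball_norm_le: assumes "X \<in> ball X0 1" shows "norm X \<le> norm X0 + 1"
proof -
  have "norm X - norm X0 \<le> norm (X - X0)" by (rule norm_triangle_ineq2)
  moreover have "norm (X - X0) < 1" using assms by (simp add: dist_norm norm_minus_commute)
  ultimately show ?thesis by linarith
qed

lemma Sp_diff:
  assumes Q: "Q > 1" and B: "BP \<rho>" and H: "HO \<rho>" and X0: "X0 \<noteq> 0"
    and np: "\<And>k. X0 * of_real Q ^ k \<noteq> 1"
  shows "Sp \<rho> Q field_differentiable at X0"
proof -
  define a where "a = norm X0 / 2"
  have a: "a > 0" using X0 by (simp add: a_def)
  obtain N where N: "2 / a < Q ^ N" using real_arch_pow[OF Q] by blast
  have N': "2 \<le> a * Q ^ N" using N a by (simp add: field_simps)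
  define T where "T = (\<lambda>X. \<Sum>k. \<rho> (X * of_real Q ^ (k + N)))"
  have ge2: "2 \<le> norm (X * of_real Q ^ (k + N))" if "X \<in> ball X0 a" for X k
  proof -
    have "norm X \<ge> a" using ball_norm_ge[of X X0] that by (simp add: a_def)
    have QN: "Q ^ N \<le> Q ^ (k + N)" using Q by (simp add: power_increasing)
    have "a * Q ^ N \<le> norm X * Q ^ (k + N)"
      using \<open>norm X \<ge> a\<close> QN a Q by (intro mult_mono) auto
    then show ?thesis using N' Q by (simp add: normXQ)
  qed
  have Thol: "T holomorphic_on ball X0 a"
    unfolding T_def
  proof (rule series_holo_ball[where M = "\<lambda>k. (4 / (a * Q ^ N)) * (1 / Q) ^ k"])
    fix k
    show "(\<lambda>X. \<rho> (X * of_real Q ^ (k + N))) holomorphic_on ball X0 a"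
      unfolding holomorphic_on_def
    proof
      fix X assume X: "X \<in> ball X0 a"
      have "X * of_real Q ^ (k + N) \<noteq> 1"
        using ge2[OF X, of k] by (metis norm_one numeral_le_one_iff semiring_norm(69))
      then have "\<rho> field_differentiable at (X * of_real Q ^ (k + N))" using H unfolding HO_def by blast
      then show "(\<lambda>X. \<rho> (X * of_real Q ^ (k + N))) field_differentiable at X within ball X0 a"
        by (rule fd_at_within[OF fd_mult_const])
    qed
  next
    fix k u assume u: "u \<in> ball X0 a"
    have "norm u \<ge> a" using ball_norm_ge[of u X0] u by (simp add: a_def)
    then show "norm (\<rho> (u * of_real Q ^ (k + N))) \<le> (4 / (a * Q ^ N)) * (1 / Q) ^ k"
      by (rule Sp_bound[OF Q B a _ N'])
  next
    show "summable (\<lambda>k. (4 / (a * Q ^ N)) * (1 / Q) ^ k)" by (rule geom_summable[OF Q])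
  qed
  have Tdiff: "T field_differentiable at X0"
    using Thol a by (simp add: holomorphic_on_imp_differentiable_at)
  have Hdiff: "(\<lambda>X. \<Sum>k<N. \<rho> (X * of_real Q ^ k)) field_differentiable at X0"
  proof (rule field_differentiable_sum)
    fix k assume "k \<in> {..<N}"
    have "\<rho> field_differentiable at (X0 * of_real Q ^ k)" using H np unfolding HO_def by blast
    then show "(\<lambda>X. \<rho> (X * of_real Q ^ k)) field_differentiable at X0" by (rule fd_mult_const)
  qed
  have eq: "T X + (\<Sum>k<N. \<rho> (X * of_real Q ^ k)) = Sp \<rho> Q X" if "dist X X0 < a" for X
  proof -
    have "X \<noteq> 0" using that a by (auto simp: a_def dist_norm)
    then have "summable (\<lambda>k. \<rho> (X * of_real Q ^ k))" by (rule Sp_summable[OF Q B])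
    from suminf_split_initial_segment[OF this, of N] show ?thesis
      by (simp add: Sp_def T_def)
  qed
  have "(\<lambda>X. T X + (\<Sum>k<N. \<rho> (X * of_real Q ^ k))) field_differentiable at X0"
    by (rule field_differentiable_add[OF Tdiff Hdiff])
  then show ?thesis
    using field_differentiable_transform_within[OF a UNIV_I, where f = "\<lambda>X. T X + (\<Sum>k<N. \<rho> (X * of_real Q ^ k))" and g = "Sp \<rho> Q"] eq
    by simp
qed


lemma Sm_diff:
  assumes Q: "Q > 1" and B: "BM \<rho>" and H: "HO \<rho>"
    and np: "\<And>k. X0 / of_real Q ^ Suc k \<noteq> 1"
  shows "Sm \<rho> Q field_differentiable at X0"
proof -
  define a where "a = norm X0 + 1"
  obtain N where N: "2 * a < Q ^ N" using real_arch_pow[OF Q] by blast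
  define T where "T = (\<lambda>X. \<Sum>k. \<rho> (X / of_real Q ^ Suc (k + N)))"
  have le: "norm (X / of_real Q ^ Suc (k + N)) \<le> 1/2" if "X \<in> ball X0 1" for X k
  proof -
    have X: "norm X \<le> a" using ball_norm_le[OF that] by (simp add: a_def)
    have a0: "0 \<le> a" by (simp add: a_def)
    have QN: "Q ^ N \<le> Q ^ Suc (k + N)" using Q by (intro power_increasing) auto
    have "norm X / Q ^ Suc (k + N) \<le> a / Q ^ N"
      using X QN Q a0 by (intro frac_le) auto
    also have "\<dots> \<le> 1/2" using N Q by (simp add: field_simps)
    finally show ?thesis using Q by (simp add: normXQ' del: power_Suc)
  qed
  have Thol: "T holomorphic_on ball X0 1"
    unfolding T_def
  proof (rule series_holo_ball[where M = "\<lambda>k. (4 * a / Q ^ Suc N) * (1 / Q) ^ k"])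
    fix k
    show "(\<lambda>X. \<rho> (X / of_real Q ^ Suc (k + N))) holomorphic_on ball X0 1"
      unfolding holomorphic_on_def
    proof
      fix X assume X: "X \<in> ball X0 1"
      have "X / of_real Q ^ Suc (k + N) \<noteq> 1"
      proof
        assume "X / of_real Q ^ Suc (k + N) = 1"
        with le[OF X, of k] show False by simp
      qed
      then have "\<rho> field_differentiable at (X / of_real Q ^ Suc (k + N))" using H unfolding HO_def by blast
      then show "(\<lambda>X. \<rho> (X / of_real Q ^ Suc (k + N))) field_differentiable at X within ball X0 1"
        by (rule fd_at_within[OF fd_div_const])
    qed
  next
    fix k u assume u: "u \<in> ball X0 1"
    have "norm u \<le> a" using ball_norm_le[OF u] by (simp add: a_def)
    then show "norm (\<rho> (u / of_real Q ^ Suc (k + N))) \<le> (4 * a / Q ^ Suc N) * (1 / Q) ^ k"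
      by (rule Sm_bound[OF Q B]) (use N in auto)
  next
    show "summable (\<lambda>k. (4 * a / Q ^ Suc N) * (1 / Q) ^ k)" by (rule geom_summable[OF Q])
  qed
  have Tdiff: "T field_differentiable at X0"
    using Thol by (simp add: holomorphic_on_imp_differentiable_at)
  have Hdiff: "(\<lambda>X. \<Sum>k<N. \<rho> (X / of_real Q ^ Suc k)) field_differentiable at X0"
  proof (rule field_differentiable_sum)
    fix k assume "k \<in> {..<N}"
    have "\<rho> field_differentiable at (X0 / of_real Q ^ Suc k)" using H np unfolding HO_def by blast
    then show "(\<lambda>X. \<rho> (X / of_real Q ^ Suc k)) field_differentiable at X0" by (rule fd_div_const)
  qed
  have eq: "T X + (\<Sum>k<N. \<rho> (X / of_real Q ^ Suc k)) = Sm \<rho> Q X" for X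
  proof -
    have "summable (\<lambda>k. \<rho> (X / of_real Q ^ Suc k))" by (rule Sm_summable[OF Q B])
    from suminf_split_initial_segment[OF this, of N] show ?thesis
      by (simp add: Sm_def T_def)
  qed
  have "(\<lambda>X. T X + (\<Sum>k<N. \<rho> (X / of_real Q ^ Suc k))) field_differentiable at X0"
    by (rule field_differentiable_add[OF Tdiff Hdiff])
  then show ?thesis using eq by simp
qed

definition Kser :: "real \<Rightarrow> complex \<Rightarrow> complex" where
  "Kser Q X = Sp kap Q X + Sm kap Q X"
definition Lser :: "real \<Rightarrow> complex \<Rightarrow> complex" where
  "Lser Q X = Sp lp Q X + Sm lm Q X"

lemma Sp_shift:
  assumes Q: "Q > 1" and B: "BP \<rho>" and X: "X \<noteq> 0"
  shows "Sp \<rho> Q (X * of_real Q) = Sp \<rho> Q X - \<rho> X"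
proof -
  have s: "summable (\<lambda>k. \<rho> (X * of_real Q ^ k))" by (rule Sp_summable[OF Q B X])
  have "Sp \<rho> Q (X * of_real Q) = (\<Sum>k. \<rho> (X * of_real Q ^ Suc k))"
    unfolding Sp_def by (simp add: mult.assoc mult.commute)
  also have "\<dots> = Sp \<rho> Q X - \<rho> X"
    using suminf_split_head[OF s] by (simp add: Sp_def)
  finally show ?thesis .
qed

lemma Sm_shift:
  assumes Q: "Q > 1" and B: "BM \<rho>"
  shows "Sm \<rho> Q (X * of_real Q) = Sm \<rho> Q X + \<rho> X"
proof -
  have Q0: "complex_of_real Q \<noteq> 0" using Q by simp
  have s: "summable (\<lambda>k. \<rho> (X / of_real Q ^ Suc k))" by (rule Sm_summable[OF Q B])
  then have s': "summable (\<lambda>k. \<rho> (X / of_real Q ^ k))" by (subst summable_Suc_iff[symmetric]) simp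
  have "Sm \<rho> Q (X * of_real Q) = (\<Sum>k. \<rho> (X / of_real Q ^ k))"
    unfolding Sm_def using Q0 by (simp add: field_simps)
  also have "\<dots> = Sm \<rho> Q X + \<rho> X"
    using suminf_split_head[OF s'] by (simp add: Sm_def)
  finally show ?thesis .
qed

lemma Kser_shift:
  assumes Q: "Q > 1" and X: "X \<noteq> 0"
  shows "Kser Q (X * of_real Q) = Kser Q X"
  using Sp_shift[OF Q BP_kap X] Sm_shift[OF Q BM_kap] by (simp add: Kser_def)

lemma Lser_shift:
  assumes Q: "Q > 1" and X: "X \<noteq> 0" "X \<noteq> 1"
  shows "Lser Q (X * of_real Q) = Lser Q X + 1"
proof -
  have "X - 1 \<noteq> 0" using X by simp
  then have "lm X - lp X = 1" by (simp add: lm_def lp_def diff_divide_distrib[symmetric])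
  then show ?thesis
    using Sp_shift[OF Q BP_lp X(1)] Sm_shift[OF Q BM_lm] by (simp add: Lser_def algebra_simps)
qed

lemma Kser_diff:
  assumes Q: "Q > 1" and X0: "X0 \<noteq> 0" and np: "\<And>k. X0 * of_real Q ^ k \<noteq> 1" "\<And>k. X0 / of_real Q ^ Suc k \<noteq> 1"
  shows "Kser Q field_differentiable at X0"
  unfolding Kser_def
  by (rule field_differentiable_add[OF Sp_diff[OF Q BP_kap HO_kap X0 np(1)] Sm_diff[OF Q BM_kap HO_kap np(2)]])

lemma Lser_diff:
  assumes Q: "Q > 1" and X0: "X0 \<noteq> 0" and np: "\<And>k. X0 * of_real Q ^ k \<noteq> 1" "\<And>k. X0 / of_real Q ^ Suc k \<noteq> 1"
  shows "Lser Q field_differentiable at X0"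
  unfolding Lser_def
  by (rule field_differentiable_add[OF Sp_diff[OF Q BP_lp HO_lp X0 np(1)] Sm_diff[OF Q BM_lm HO_lm np(2)]])

definition Rser :: "(complex \<Rightarrow> complex) \<Rightarrow> (complex \<Rightarrow> complex) \<Rightarrow> real \<Rightarrow> complex \<Rightarrow> complex" where
  "Rser \<rho>p \<rho>m Q X = Sp \<rho>p Q (X * of_real Q) + Sm \<rho>m Q X"

lemma Rser_diff:
  assumes Q: "Q > 1" and Bp: "BP \<rho>p" and Hp: "HO \<rho>p" and Bm: "BM \<rho>m" and Hm: "HO \<rho>m"
    and X0: "X0 \<noteq> 0" and np: "\<And>k. X0 * of_real Q ^ Suc k \<noteq> 1" "\<And>k. X0 / of_real Q ^ Suc k \<noteq> 1"
  shows "Rser \<rho>p \<rho>m Q field_differentiable at X0"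
proof -
  have X0Q: "X0 * of_real Q \<noteq> 0" using X0 Q by simp
  have "X0 * of_real Q * of_real Q ^ k \<noteq> 1" for k using np(1)[of k] by (simp add: mult.assoc mult.commute)
  then have "Sp \<rho>p Q field_differentiable at (X0 * of_real Q)" by (rule Sp_diff[OF Q Bp Hp X0Q])
  then have "(\<lambda>X. Sp \<rho>p Q (X * of_real Q)) field_differentiable at X0" by (rule fd_mult_const)
  then show ?thesis unfolding Rser_def
    by (rule field_differentiable_add[OF _ Sm_diff[OF Q Bm Hm np(2)]])
qed

lemma Kser_split:
  assumes Q: "Q > 1" and X: "X \<noteq> 0"
  shows "Kser Q X = kap X + Rser kap kap Q X"
  using Sp_shift[OF Q BP_kap X] by (simp add: Kser_def Rser_def)

lemma Lser_split:
  assumes Q: "Q > 1" and X: "X \<noteq> 0"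
  shows "Lser Q X = lp X + Rser lp lm Q X"
  using Sp_shift[OF Q BP_lp X] by (simp add: Lser_def Rser_def)

lemma suminf_Re_pos: "summable f \<Longrightarrow> (\<And>k. Re (f k) > 0) \<Longrightarrow> Re (suminf f) > 0"
  by (simp add: Re_suminf suminf_pos summable_Re)
lemma suminf_Re_neg: "summable f \<Longrightarrow> (\<And>k. Re (f k) < 0) \<Longrightarrow> Re (suminf f) < 0"
  using suminf_Re_pos[of "\<lambda>k. - f k"] by (simp add: suminf_minus summable_minus_iff)
lemma suminf_Im_pos: "summable f \<Longrightarrow> (\<And>k. Im (f k) > 0) \<Longrightarrow> Im (suminf f) > 0"
  by (simp add: Im_suminf suminf_pos summable_Im)
lemma suminf_Im_neg: "summable f \<Longrightarrow> (\<And>k. Im (f k) < 0) \<Longrightarrow> Im (suminf f) < 0"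
  using suminf_Im_pos[of "\<lambda>k. - f k"] by (simp add: suminf_minus summable_minus_iff)
lemma suminf_Im_0: "summable f \<Longrightarrow> (\<And>k. Im (f k) = 0) \<Longrightarrow> Im (suminf f) = 0"
  by (simp add: Im_suminf)

lemma kap_real: "kap (of_real y) = of_real (y / (y - 1)^2)"
  by (simp add: kap_def)

lemma ofQ: "complex_of_real x * complex_of_real Q ^ k = of_real (x * Q ^ k)"
  "complex_of_real x / complex_of_real Q ^ k = of_real (x / Q ^ k)"
  by simp_all

lemma neg_frac: "(y::real) < 0 \<Longrightarrow> y / (y - 1)^2 < 0"
  by (intro divide_neg_pos) auto
lemma pos_frac: "(y::real) > 0 \<Longrightarrow> y \<noteq> 1 \<Longrightarrow> y / (y - 1)^2 > 0"
  by (intro divide_pos_pos) auto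

lemma Kser_neg:
  assumes Q: "Q > 1" and x: "x < 0"
  shows "Im (Kser Q (of_real x)) = 0" "Re (Kser Q (of_real x)) < 0"
proof -
  have X: "complex_of_real x \<noteq> 0" using x by simp
  have s1: "summable (\<lambda>k. kap (of_real x * of_real Q ^ k))" by (rule Sp_summable[OF Q BP_kap X])
  have s2: "summable (\<lambda>k. kap (of_real x / of_real Q ^ Suc k))" by (rule Sm_summable[OF Q BM_kap])
  have n1: "x * Q ^ k < 0" for k using x Q by (simp add: mult_neg_pos)
  have n2: "x / Q ^ Suc k < 0" for k using x Q by (simp add: divide_neg_pos del: power_Suc)
  have t1: "Re (kap (of_real x * of_real Q ^ k)) < 0" "Im (kap (of_real x * of_real Q ^ k)) = 0" for k
    using neg_frac[OF n1[of k]] unfolding ofQ kap_real by auto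
  have t2: "Re (kap (of_real x / of_real Q ^ Suc k)) < 0" "Im (kap (of_real x / of_real Q ^ Suc k)) = 0" for k
    using neg_frac[OF n2[of k]] unfolding ofQ kap_real by auto
  show "Im (Kser Q (of_real x)) = 0"
    unfolding Kser_def Sp_def Sm_def using suminf_Im_0[OF s1 t1(2)] suminf_Im_0[OF s2 t2(2)] by simp
  show "Re (Kser Q (of_real x)) < 0"
    unfolding Kser_def Sp_def Sm_def using suminf_Re_neg[OF s1 t1(1)] suminf_Re_neg[OF s2 t2(1)] by simp
qed

lemma Kser_pos:
  assumes Q: "Q > 1" and x: "x > 0" and np: "\<And>k. x * Q ^ k \<noteq> 1" "\<And>k. x / Q ^ Suc k \<noteq> 1"
  shows "Im (Kser Q (of_real x)) = 0" "Re (Kser Q (of_real x)) > 0"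
proof -
  have X: "complex_of_real x \<noteq> 0" using x by simp
  have s1: "summable (\<lambda>k. kap (of_real x * of_real Q ^ k))" by (rule Sp_summable[OF Q BP_kap X])
  have s2: "summable (\<lambda>k. kap (of_real x / of_real Q ^ Suc k))" by (rule Sm_summable[OF Q BM_kap])
  have p1: "x * Q ^ k > 0" for k using x Q by simp
  have p2: "x / Q ^ Suc k > 0" for k using x Q by (simp del: power_Suc)
  have q1: "(x * Q ^ k - 1)^2 > 0" for k using np(1)[of k] by simp
  have q2: "(x / Q ^ Suc k - 1)^2 > 0" for k using np(2)[of k] by (simp del: power_Suc)
  have t1: "Re (kap (of_real x * of_real Q ^ k)) > 0" "Im (kap (of_real x * of_real Q ^ k)) = 0" for k
    using pos_frac[OF p1[of k] np(1)[of k]] unfolding ofQ kap_real by auto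
  have t2: "Re (kap (of_real x / of_real Q ^ Suc k)) > 0" "Im (kap (of_real x / of_real Q ^ Suc k)) = 0" for k
    using pos_frac[OF p2[of k] np(2)[of k]] unfolding ofQ kap_real by auto
  show "Im (Kser Q (of_real x)) = 0"
    unfolding Kser_def Sp_def Sm_def using suminf_Im_0[OF s1 t1(2)] suminf_Im_0[OF s2 t2(2)] by simp
  show "Re (Kser Q (of_real x)) > 0"
    unfolding Kser_def Sp_def Sm_def using suminf_Re_pos[OF s1 t1(1)] suminf_Re_pos[OF s2 t2(1)] by simp
qed

lemma Im_lp: "Im (lp Y) = - Im Y / (cmod (Y - 1))^2"
  by (simp add: lp_def Im_divide')
lemma Im_lm: "Im (lm Y) = - Im Y / (cmod (Y - 1))^2"
  by (simp add: lm_def Im_divide' algebra_simps)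

lemma cmod_pos_of_Im: assumes "Im Y \<noteq> 0" shows "(cmod (Y - 1))^2 > 0"
proof -
  have "Y \<noteq> 1" using assms by (intro notI) simp
  then show ?thesis by simp
qed

lemma Im_XQ: "Im (X * complex_of_real Q ^ k) = Im X * Q ^ k" "Im (X / complex_of_real Q ^ k) = Im X / Q ^ k"
  by (simp_all flip: of_real_power)

lemma Lser_Im_neg:
  assumes Q: "Q > 1" and X: "Im X > 0"
  shows "Im (Lser Q X) < 0"
proof -
  have X0: "X \<noteq> 0" using X by auto
  have s1: "summable (\<lambda>k. lp (X * of_real Q ^ k))" by (rule Sp_summable[OF Q BP_lp X0])
  have s2: "summable (\<lambda>k. lm (X / of_real Q ^ Suc k))" by (rule Sm_summable[OF Q BM_lm])
  have a1: "Im (X * of_real Q ^ k) > 0" for k using X Q by (simp add: Im_XQ)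
  have a2: "Im (X / of_real Q ^ Suc k) > 0" for k using X Q by (simp add: Im_XQ del: power_Suc)
  have t1: "Im (lp (X * of_real Q ^ k)) < 0" for k
  proof -
    have i: "Im (X * of_real Q ^ k) > 0" by (rule a1)
    have c: "(cmod (X * of_real Q ^ k - 1))^2 > 0" by (rule cmod_pos_of_Im) (use i in linarith)
    show ?thesis unfolding Im_lp using i c by (intro divide_neg_pos) simp_all
  qed
  have t2: "Im (lm (X / of_real Q ^ Suc k)) < 0" for k
  proof -
    have i: "Im (X / of_real Q ^ Suc k) > 0" by (rule a2)
    have c: "(cmod (X / of_real Q ^ Suc k - 1))^2 > 0" by (rule cmod_pos_of_Im) (use i in linarith)
    show ?thesis unfolding Im_lm using i c by (intro divide_neg_pos) simp_all
  qed
  show ?thesis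
    unfolding Lser_def Sp_def Sm_def using suminf_Im_neg[OF s1 t1] suminf_Im_neg[OF s2 t2] by simp
qed

lemma Lser_Im_pos:
  assumes Q: "Q > 1" and X: "Im X < 0"
  shows "Im (Lser Q X) > 0"
proof -
  have X0: "X \<noteq> 0" using X by auto
  have s1: "summable (\<lambda>k. lp (X * of_real Q ^ k))" by (rule Sp_summable[OF Q BP_lp X0])
  have s2: "summable (\<lambda>k. lm (X / of_real Q ^ Suc k))" by (rule Sm_summable[OF Q BM_lm])
  have a1: "Im (X * of_real Q ^ k) < 0" for k using X Q by (simp add: Im_XQ mult_neg_pos)
  have a2: "Im (X / of_real Q ^ Suc k) < 0" for k using X Q by (simp add: Im_XQ divide_neg_pos del: power_Suc)
  have t1: "Im (lp (X * of_real Q ^ k)) > 0" for k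
  proof -
    have i: "Im (X * of_real Q ^ k) < 0" by (rule a1)
    have c: "(cmod (X * of_real Q ^ k - 1))^2 > 0" by (rule cmod_pos_of_Im) (use i in linarith)
    show ?thesis unfolding Im_lp using i c by (intro divide_pos_pos) simp_all
  qed
  have t2: "Im (lm (X / of_real Q ^ Suc k)) > 0" for k
  proof -
    have i: "Im (X / of_real Q ^ Suc k) < 0" by (rule a2)
    have c: "(cmod (X / of_real Q ^ Suc k - 1))^2 > 0" by (rule cmod_pos_of_Im) (use i in linarith)
    show ?thesis unfolding Im_lm using i c by (intro divide_pos_pos) simp_all
  qed
  show ?thesis
    unfolding Lser_def Sp_def Sm_def using suminf_Im_pos[OF s1 t1] suminf_Im_pos[OF s2 t2] by simp
qed

lemma cnj_suminf: "summable f \<Longrightarrow> cnj (suminf f) = (\<Sum>k. cnj (f k))"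
  by (metis sums_cnj summable_sums sums_unique)

lemma Lser_cnj:
  assumes Q: "Q > 1" and X: "X \<noteq> 0"
  shows "Lser Q (cnj X) = cnj (Lser Q X)"
proof -
  have s1: "summable (\<lambda>k. lp (X * of_real Q ^ k))" by (rule Sp_summable[OF Q BP_lp X])
  have s2: "summable (\<lambda>k. lm (X / of_real Q ^ Suc k))" by (rule Sm_summable[OF Q BM_lm])
  have c1: "cnj (lp Y) = lp (cnj Y)" for Y by (simp add: lp_def)
  have c2: "cnj (lm Y) = lm (cnj Y)" for Y by (simp add: lm_def)
  show ?thesis
    unfolding Lser_def Sp_def Sm_def complex_cnj_add cnj_suminf[OF s1] cnj_suminf[OF s2] c1 c2
    by simp
qed

definition tr :: "complex \<Rightarrow> complex \<Rightarrow> complex set" where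
  "tr \<tau> a = {p. p - a \<in> lattice \<tau>}"

lemma pole_set_tr: "pole_set \<tau> d = lattice \<tau> \<union> tr \<tau> (of_real d)"
proof -
  have "(\<lambda>l. complex_of_real d + l) ` lattice \<tau> = tr \<tau> (of_real d)"
  proof
    show "(\<lambda>l. complex_of_real d + l) ` lattice \<tau> \<subseteq> tr \<tau> (of_real d)" by (auto simp: tr_def)
    show "tr \<tau> (of_real d) \<subseteq> (\<lambda>l. complex_of_real d + l) ` lattice \<tau>"
    proof
      fix p assume "p \<in> tr \<tau> (of_real d)"
      then have "p - of_real d \<in> lattice \<tau>" by (simp add: tr_def)
      moreover have "p = of_real d + (p - of_real d)" by simp
      ultimately show "p \<in> (\<lambda>l. complex_of_real d + l) ` lattice \<tau>" by (rule rev_image_eqI)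
    qed
  qed
  then show ?thesis by (simp add: pole_set_def)
qed

locale lat =
  fixes \<tau> :: complex and t :: real
  assumes tau_eq: "\<tau> = \<i> * of_real t" and t_pos: "t > 0"
begin

lemma lattice_iff: "u \<in> lattice \<tau> \<longleftrightarrow> Re u \<in> \<int> \<and> Im u / t \<in> \<int>"
proof
  assume "u \<in> lattice \<tau>"
  then obtain m k where u: "u = of_int m + of_int k * \<tau>" by (auto simp: lattice_def)
  then show "Re u \<in> \<int> \<and> Im u / t \<in> \<int>" using t_pos by (simp add: tau_eq)
next
  assume "Re u \<in> \<int> \<and> Im u / t \<in> \<int>"
  then obtain m k where m: "Re u = of_int m" and k: "Im u / t = of_int k" by (auto elim!: Ints_cases)
  have "u = of_int m + of_int k * \<tau>"
    using m k t_pos by (simp add: complex_eq_iff tau_eq field_simps)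
  then show "u \<in> lattice \<tau>" by (auto simp: lattice_def)
qed

lemma lattice_intro: "of_int m + of_int k * \<tau> \<in> lattice \<tau>"
  by (auto simp: lattice_def)

lemma lattice_0: "0 \<in> lattice \<tau>" and lattice_1: "1 \<in> lattice \<tau>" and lattice_tau: "\<tau> \<in> lattice \<tau>"
  using lattice_intro[of 0 0] lattice_intro[of 1 0] lattice_intro[of 0 1] by simp_all

lemma lattice_add: "u \<in> lattice \<tau> \<Longrightarrow> v \<in> lattice \<tau> \<Longrightarrow> u + v \<in> lattice \<tau>"
  unfolding lattice_iff by (auto simp: add_divide_distrib)

lemma lattice_uminus: "u \<in> lattice \<tau> \<Longrightarrow> - u \<in> lattice \<tau>"
  unfolding lattice_iff by auto

lemma lattice_diff: "u \<in> lattice \<tau> \<Longrightarrow> v \<in> lattice \<tau> \<Longrightarrow> u - v \<in> lattice \<tau>"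
  using lattice_add[of u "- v"] lattice_uminus[of v] by simp

lemma lattice_cnj: "u \<in> lattice \<tau> \<Longrightarrow> cnj u \<in> lattice \<tau>"
  unfolding lattice_iff by auto

lemma closed_lattice: "closed (lattice \<tau>)"
proof -
  have "lattice \<tau> = (\<lambda>u. Re u) -` \<int> \<inter> (\<lambda>u. Im u / t) -` \<int>"
    by (auto simp: lattice_iff)
  moreover have "closed ((\<lambda>u. Re u) -` \<int>)"
    by (rule continuous_closed_vimage[OF closed_Ints]) (rule continuous_Re[OF continuous_ident])
  moreover have "closed ((\<lambda>u. Im u / t) -` \<int>)"
  proof (rule continuous_closed_vimage[OF closed_Ints])
    fix x show "isCont (\<lambda>u. Im u / t) x"
      using t_pos by (intro continuous_intros continuous_Im[OF continuous_ident]) auto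
  qed
  ultimately show ?thesis by (simp add: closed_Int)
qed

lemma Ints_nonzero_abs: assumes "(x::real) \<in> \<int>" "x \<noteq> 0" shows "1 \<le> \<bar>x\<bar>"
proof -
  obtain k where k: "x = of_int k" using assms(1) by (auto elim: Ints_cases)
  then have "k \<noteq> 0" using assms(2) by simp
  then have "1 \<le> \<bar>k\<bar>" by presburger
  then show ?thesis using k by simp
qed

lemma lattice_sep:
  assumes u: "u \<in> lattice \<tau>" and ne: "u \<noteq> 0"
  shows "min 1 t \<le> norm u"
proof (cases "Re u = 0")
  case True
  then have "Im u \<noteq> 0" using ne by (simp add: complex_eq_iff)
  then have nz: "Im u / t \<noteq> 0" using t_pos by simp
  have "Im u / t \<in> \<int>" using u by (simp add: lattice_iff)
  from Ints_nonzero_abs[OF this nz] have "1 \<le> \<bar>Im u / t\<bar>" .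
  then have "t \<le> \<bar>Im u\<bar>" using t_pos by (simp add: abs_divide le_divide_eq)
  then show ?thesis using abs_Im_le_cmod[of u] by linarith
next
  case False
  then have "1 \<le> \<bar>Re u\<bar>" using u Ints_nonzero_abs by (simp add: lattice_iff)
  then show ?thesis using abs_Re_le_cmod[of u] by linarith
qed

lemma sep_pos: "min 1 t > 0" using t_pos by simp

lemma tr_closed: "closed (tr \<tau> a)"
proof -
  have "tr \<tau> a = (\<lambda>p. p - a) -` lattice \<tau>" by (auto simp: tr_def)
  then show ?thesis using continuous_closed_vimage[OF closed_lattice, of "\<lambda>p. p - a"]
    by (simp add: continuous_intros)
qed

lemma tr_shift: assumes l: "l \<in> lattice \<tau>" shows "p + l \<in> tr \<tau> a \<longleftrightarrow> p \<in> tr \<tau> a"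
proof
  assume "p + l \<in> tr \<tau> a"
  then have "p + l - a \<in> lattice \<tau>" by (simp add: tr_def)
  from lattice_diff[OF this l] show "p \<in> tr \<tau> a" by (simp add: tr_def algebra_simps)
next
  assume "p \<in> tr \<tau> a"
  then have "p - a \<in> lattice \<tau>" by (simp add: tr_def)
  from lattice_add[OF this l] show "p + l \<in> tr \<tau> a" by (simp add: tr_def algebra_simps)
qed

lemma tr_isolated:
  assumes x: "x \<in> tr \<tau> a" and p: "p \<in> tr \<tau> a" and d: "dist p x < min 1 t"
  shows "p = x"
proof (rule ccontr)
  assume "p \<noteq> x"
  have "p - x \<in> lattice \<tau>" using lattice_diff[of "p - a" "x - a"] x p by (simp add: tr_def)
  then have "min 1 t \<le> norm (p - x)" using lattice_sep \<open>p \<noteq> x\<close> by simp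
  then show False using d by (auto simp: dist_norm min_le_iff_disj)
qed

lemma lattice_tr0: "lattice \<tau> = tr \<tau> 0" by (simp add: tr_def)

lemma ev_not_tr: "eventually (\<lambda>p. p \<notin> tr \<tau> a) (at x)"
proof (cases "x \<in> tr \<tau> a")
  case True
  show ?thesis unfolding eventually_at
  proof (intro exI[of _ "min 1 t"] conjI ballI impI)
    show "min 1 t > 0" by (rule sep_pos)
    fix p assume H: "p \<noteq> x \<and> dist p x < min 1 t"
    show "p \<notin> tr \<tau> a"
    proof
      assume "p \<in> tr \<tau> a"
      from tr_isolated[OF True this] H show False by simp
    qed
  qed
next
  case False
  have "open (- tr \<tau> a)" using tr_closed by auto
  then have "eventually (\<lambda>p. p \<in> - tr \<tau> a) (nhds x)" using False by (intro eventually_nhds_in_open) auto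
  then have "eventually (\<lambda>p. p \<in> - tr \<tau> a) (at x)" by (rule filter_leD[OF at_within_le_nhds])
  then show ?thesis by simp
qed

end

context lat begin

lemma shift_int_mem:
  assumes T1: "\<And>p. p \<in> T \<Longrightarrow> p + c \<in> T" and T2: "\<And>p. p \<in> T \<Longrightarrow> p - c \<in> T"
  shows "\<forall>p\<in>T. p + of_int m * c \<in> T"
proof (induction m rule: int_induct[where k = 0])
  case base then show ?case by simp
next
  case (step1 i)
  show ?case
  proof
    fix p assume p: "p \<in> T"
    have eq: "p + of_int (i + 1) * c = (p + of_int i * c) + c" by (simp add: algebra_simps)
    show "p + of_int (i + 1) * c \<in> T" unfolding eq by (rule T1) (use step1.IH p in blast)
  qed
next
  case (step2 i)
  show ?case
  proof
    fix p assume p: "p \<in> T"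
    have eq: "p + of_int (i - 1) * c = (p + of_int i * c) - c" by (simp add: algebra_simps)
    show "p + of_int (i - 1) * c \<in> T" unfolding eq by (rule T2) (use step2.IH p in blast)
  qed
qed

lemma shift_int:
  assumes T1: "\<And>p. p \<in> T \<Longrightarrow> p + c \<in> T" and T2: "\<And>p. p \<in> T \<Longrightarrow> p - c \<in> T"
    and per: "\<And>p. p \<in> T \<Longrightarrow> f (p + c) = f p"
  shows "\<forall>p\<in>T. f (p + of_int m * c) = f p"
proof (induction m rule: int_induct[where k = 0])
  case base then show ?case by simp
next
  case (step1 i)
  show ?case
  proof
    fix p assume p: "p \<in> T"
    have mem: "p + of_int i * c \<in> T" using shift_int_mem[OF T1 T2] p by blast
    have eq: "p + of_int (i + 1) * c = (p + of_int i * c) + c" by (simp add: algebra_simps)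
    have "f (p + of_int (i + 1) * c) = f (p + of_int i * c)" unfolding eq by (rule per[OF mem])
    then show "f (p + of_int (i + 1) * c) = f p" using step1.IH p by simp
  qed
next
  case (step2 i)
  show ?case
  proof
    fix p assume p: "p \<in> T"
    have mem: "p + of_int (i - 1) * c \<in> T" using shift_int_mem[OF T1 T2] p by blast
    have eq: "p + of_int i * c = p + of_int (i - 1) * c + c" by (simp add: algebra_simps)
    have "f (p + of_int i * c) = f (p + of_int (i - 1) * c)" unfolding eq by (rule per[OF mem])
    then show "f (p + of_int (i - 1) * c) = f p" using step2.IH p by simp
  qed
qed

lemma lat_periodic:
  assumes T: "\<And>p l. l \<in> lattice \<tau> \<Longrightarrow> p + l \<in> T \<longleftrightarrow> p \<in> T"
    and per: "\<And>p. p \<in> T \<Longrightarrow> f (p + 1) = f p \<and> f (p + \<tau>) = f p"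
    and p: "p \<in> T" and l: "l \<in> lattice \<tau>"
  shows "f (p + l) = f p"
proof -
  obtain m k where lmk: "l = of_int m + of_int k * \<tau>" using l by (auto simp: lattice_def)
  have T1: "p + 1 \<in> T" "p - 1 \<in> T" "p + \<tau> \<in> T" "p - \<tau> \<in> T" if "p \<in> T" for p
  proof -
    show "p + 1 \<in> T" using T[OF lattice_1] that by simp
    show "p + \<tau> \<in> T" using T[OF lattice_tau] that by simp
    show "p - 1 \<in> T" using T[OF lattice_uminus[OF lattice_1], of p] that by simp
    show "p - \<tau> \<in> T" using T[OF lattice_uminus[OF lattice_tau], of p] that by simp
  qed
  have A: "\<forall>q\<in>T. f (q + of_int m' * 1) = f q" for m'
    by (rule shift_int) (use T1 per in auto)
  have B: "\<forall>q\<in>T. f (q + of_int k' * \<tau>) = f q" for k'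
    by (rule shift_int) (use T1 per in auto)
  have pk: "p + of_int k * \<tau> \<in> T"
    using T[OF lattice_intro[of 0 k], of p] p by simp
  have "f (p + l) = f ((p + of_int k * \<tau>) + of_int m * 1)" by (simp add: lmk algebra_simps)
  also have "\<dots> = f (p + of_int k * \<tau>)" using A pk by blast
  also have "\<dots> = f p" using B p by blast
  finally show ?thesis .
qed

end

locale pis = lat +
  fixes d :: real and n :: nat and \<pi> :: "complex \<Rightarrow> complex"
  assumes D: "0 < d" "d < 1" and n: "n \<ge> 1"
    and pi_space: "sec_space \<tau> d n \<pi>"
    and pi_monic: "(\<lambda>p. p ^ n * \<pi> p - 1) \<in> O[at 0](\<lambda>p. p)"
begin

abbreviation "PS \<equiv> pole_set \<tau> d"

lemma PS_eq: "PS = tr \<tau> 0 \<union> tr \<tau> (of_real d)"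
  using pole_set_tr[of \<tau> d] lattice_tr0 by simp

lemma PS_closed: "closed PS"
  unfolding PS_eq by (intro closed_Un tr_closed)

lemma PS_open: "open (- PS)"
  using PS_closed by auto

lemma PS_shift: "l \<in> lattice \<tau> \<Longrightarrow> p + l \<in> PS \<longleftrightarrow> p \<in> PS"
  unfolding PS_eq using tr_shift by blast

lemma ev_not_PS: "eventually (\<lambda>p. p \<notin> PS) (at x)"
  unfolding PS_eq using eventually_conj[OF ev_not_tr[of 0 x] ev_not_tr[of "of_real d" x]] by simp

lemma d_not_lattice: "complex_of_real d \<notin> lattice \<tau>"
proof
  assume "complex_of_real d \<in> lattice \<tau>"
  then have "d \<in> \<int>" by (simp add: lattice_iff)
  then obtain k where k: "d = of_int k" by (auto elim: Ints_cases)
  with D have "0 < k" "k < 1" by simp_all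
  then show False by linarith
qed

lemma pi_hol: "\<pi> holomorphic_on - PS"
  using pi_space by (simp add: sec_space_def)

lemma pi_per1: "p \<notin> PS \<Longrightarrow> \<pi> (p + 1) = \<pi> p \<and> \<pi> (p + \<tau>) = \<pi> p"
  using pi_space by (simp add: sec_space_def)

lemma pi_per: "p \<notin> PS \<Longrightarrow> l \<in> lattice \<tau> \<Longrightarrow> \<pi> (p + l) = \<pi> p"
  by (rule lat_periodic[where T = "- PS"]) (use PS_shift pi_per1 in auto)

lemma pi_lim0: "((\<lambda>p. p ^ n * \<pi> p) \<longlongrightarrow> 1) (at 0)"
proof -
  obtain c where c: "c > 0" "eventually (\<lambda>p. norm (p ^ n * \<pi> p - 1) \<le> c * norm p) (at 0)"
    using landau_o.bigE[OF pi_monic] by blast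
  have "((\<lambda>p. norm p) \<longlongrightarrow> 0) (at (0::complex))"
    by (rule tendsto_norm_zero[OF tendsto_ident_at])
  from tendsto_mult[OF tendsto_const this, of c]
  have "((\<lambda>p. c * norm p) \<longlongrightarrow> 0) (at (0::complex))" by simp
  from Lim_null_comparison[OF c(2) this] have "((\<lambda>p. p ^ n * \<pi> p - 1) \<longlongrightarrow> 0) (at 0)" .
  then have "((\<lambda>p. (p ^ n * \<pi> p - 1) + 1) \<longlongrightarrow> 0 + 1) (at 0)" by (intro tendsto_intros)
  then show ?thesis by simp
qed

lemma pi_lim: assumes l: "l \<in> lattice \<tau>" shows "((\<lambda>p. (p - l) ^ n * \<pi> p) \<longlongrightarrow> 1) (at l)"
proof -
  have "((\<lambda>h. (l + h - l) ^ n * \<pi> (l + h - l)) \<longlongrightarrow> 1) (at 0)" using pi_lim0 by simp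
  then have A: "((\<lambda>p. (p - l) ^ n * \<pi> (p - l)) \<longlongrightarrow> 1) (at l)"
    by (rule LIM_offset_zero_cancel)
  have "eventually (\<lambda>p. (p - l) ^ n * \<pi> (p - l) = (p - l) ^ n * \<pi> p) (at l)"
  proof (rule eventually_mono[OF ev_not_PS[of l]])
    fix p assume p: "p \<notin> PS"
    have "p - l \<notin> PS" using PS_shift[OF lattice_uminus[OF l], of p] p by simp
    then have "\<pi> ((p - l) + l) = \<pi> (p - l)" by (rule pi_per[OF _ l])
    then show "(p - l) ^ n * \<pi> (p - l) = (p - l) ^ n * \<pi> p" by simp
  qed
  from tendsto_cong[OF this] A show ?thesis by simp
qed

lemma pole_order_leD:
  assumes "pole_order_le f a m"
  obtains r G where "r > 0" "G holomorphic_on ball a r" "\<And>u. u \<in> ball a r - {a} \<Longrightarrow> f u = G u / (u - a) ^ m"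
  using assms unfolding pole_order_le_def by blast

lemma limit_of_factor:
  assumes r: "r > 0" and G: "G holomorphic_on ball a r"
    and eq: "\<And>u. u \<in> ball a r - {a} \<Longrightarrow> F u = G u"
    and lim: "(F \<longlongrightarrow> L) (at a)"
  shows "G a = L"
proof -
  have "isCont G a" using G r
    by (metis centre_in_ball continuous_on_eq_continuous_at holomorphic_on_imp_continuous_on open_ball)
  then have "(G \<longlongrightarrow> G a) (at a)" by (simp add: isCont_def)
  moreover have "eventually (\<lambda>u. F u = G u) (at a)"
    unfolding eventually_at using r eq by (intro exI[of _ r]) (auto simp: dist_commute)
  ultimately have "(F \<longlongrightarrow> G a) (at a)" by (simp add: tendsto_cong)
  from tendsto_unique[OF _ this lim] show ?thesis by simp
qed

lemma pi_pole:
  assumes l: "l \<in> lattice \<tau>"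
  obtains r G where "r > 0" "G holomorphic_on ball l r" "G l = 1"
    "\<And>u. u \<in> ball l r - {l} \<Longrightarrow> \<pi> u = G u / (u - l) ^ n"
proof -
  have "pole_order_le \<pi> l n" using pi_space l by (simp add: sec_space_def)
  then obtain r G where r: "r > 0" "G holomorphic_on ball l r"
    and eq: "\<And>u. u \<in> ball l r - {l} \<Longrightarrow> \<pi> u = G u / (u - l) ^ n"
    unfolding pole_order_le_def by blast
  have "G l = 1"
  proof (rule limit_of_factor[OF r _ pi_lim[OF l]])
    fix u assume u: "u \<in> ball l r - {l}"
    then show "(u - l) ^ n * \<pi> u = G u" using eq[OF u] by simp
  qed
  show ?thesis by (rule that[OF r(1) r(2) \<open>G l = 1\<close> eq])
qed

definition "S0 = {p. 0 < Im p \<and> Im p < t}"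

lemma S0_open: "open S0"
  unfolding S0_def by (simp add: open_Collect_conj open_Collect_less continuous_on_Im continuous_on_const)

lemma S0_convex: "convex S0"
proof -
  have "S0 = {p. Im p > 0} \<inter> {p. Im p < t}" by (auto simp: S0_def)
  then show ?thesis by (simp add: convex_halfspace_Im_gt convex_halfspace_Im_lt convex_Int)
qed

lemma S0_connected: "connected S0" using S0_convex convex_connected by blast

lemma Ints_strict: "(x::real) \<in> \<int> \<Longrightarrow> 0 < x \<Longrightarrow> x < 1 \<Longrightarrow> False"
  by (metis Ints_cases of_int_0_less_iff of_int_less_1_iff not_less zero_less_iff_neq_zero int_one_le_iff_zero_less
      linorder_not_le)

lemma S0_not_PS: "p \<in> S0 \<Longrightarrow> p \<notin> PS"
proof
  assume p: "p \<in> S0" and "p \<in> PS"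
  then have "p - 0 \<in> lattice \<tau> \<or> p - of_real d \<in> lattice \<tau>" by (simp add: PS_eq tr_def)
  then have "Im p / t \<in> \<int>" by (auto simp: lattice_iff)
  moreover have "0 < Im p / t" "Im p / t < 1" using p t_pos by (auto simp: S0_def)
  ultimately show False using Ints_strict by blast
qed

lemma pi_hol_S0: "\<pi> holomorphic_on S0"
  by (rule holomorphic_on_subset[OF pi_hol]) (use S0_not_PS in auto)

end

definition fs :: "(complex \<Rightarrow> complex) \<Rightarrow> complex \<Rightarrow> complex" where
  "fs f p = cnj (f (cnj p))"

lemma fs_eq: "fs f = (\<lambda>p. cnj (f (cnj p)))"
  by (rule ext) (simp add: fs_def)

lemma isCont_cnj': "isCont cnj x"
  by (rule continuous_cnj[OF continuous_ident])

lemma hol_fs: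
  assumes f: "f holomorphic_on S" and S: "open S"
  shows "fs f holomorphic_on {p. cnj p \<in> S}"
proof -
  have op: "open {p. cnj p \<in> S}"
  proof -
    have "{p. cnj p \<in> S} = cnj -` S" by auto
    then show ?thesis using continuous_open_vimage[OF S isCont_cnj'] by simp
  qed
  show ?thesis unfolding holomorphic_on_open[OF op]
  proof
    fix x assume x: "x \<in> {p. cnj p \<in> S}"
    then have "f field_differentiable at (cnj x)" using f S holomorphic_on_imp_differentiable_at by auto
    then obtain f' where "(f has_field_derivative f') (at (cnj x))" by (auto simp: field_differentiable_def)
    from has_field_derivative_cnj_cnj[OF this] have "(fs f has_field_derivative cnj f') (at x)"
      by (simp add: fs_eq o_def)
    then show "\<exists>f'. (fs f has_field_derivative f') (at x)" by blast
  qed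
qed

lemma pole_order_fs:
  assumes "pole_order_le f (cnj a) m"
  shows "pole_order_le (fs f) a m"
proof -
  obtain r G where r: "r > 0" and G: "G holomorphic_on ball (cnj a) r"
    and eq: "\<And>u. u \<in> ball (cnj a) r - {cnj a} \<Longrightarrow> f u = G u / (u - cnj a) ^ m"
    using assms unfolding pole_order_le_def by blast
  have ballc: "{p. cnj p \<in> ball (cnj a) r} = ball a r"
    by (auto simp: dist_norm complex_cnj_diff[symmetric] simp del: complex_cnj_diff)
  have "fs G holomorphic_on ball a r" using hol_fs[OF G open_ball] ballc by simp
  moreover have "fs f u = fs G u / (u - a) ^ m" if u: "u \<in> ball a r - {a}" for u
  proof -
    have "cnj u \<in> ball (cnj a) r - {cnj a}" using u ballc by auto
    from eq[OF this] show ?thesis by (simp add: fs_def)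
  qed
  ultimately show ?thesis unfolding pole_order_le_def using r by blast
qed

context pis begin

lemma cnj_tau: "cnj \<tau> = - \<tau>" by (simp add: tau_eq)

lemma cnj_tr: "cnj p \<in> tr \<tau> (cnj a) \<longleftrightarrow> p \<in> tr \<tau> a"
proof
  assume "cnj p \<in> tr \<tau> (cnj a)"
  then have "cnj p - cnj a \<in> lattice \<tau>" by (simp add: tr_def)
  from lattice_cnj[OF this] show "p \<in> tr \<tau> a" by (simp add: tr_def)
next
  assume "p \<in> tr \<tau> a"
  then have "p - a \<in> lattice \<tau>" by (simp add: tr_def)
  from lattice_cnj[OF this] show "cnj p \<in> tr \<tau> (cnj a)" by (simp add: tr_def)
qed

lemma PS_cnj: "cnj p \<in> PS \<longleftrightarrow> p \<in> PS"
  using cnj_tr[of p 0] cnj_tr[of p "of_real d"] by (simp add: PS_eq)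

lemma sec_fs:
  assumes f: "sec_space \<tau> d m f"
  shows "sec_space \<tau> d m (fs f)"
proof -
  have per: "\<And>z. z \<notin> PS \<Longrightarrow> f (z + 1) = f z \<and> f (z + \<tau>) = f z"
    and hol: "f holomorphic_on - PS"
    and pl: "\<And>l. l \<in> lattice \<tau> \<Longrightarrow> pole_order_le f l m"
    and pd: "\<And>l. l \<in> lattice \<tau> \<Longrightarrow> pole_order_le f (of_real d + l) 1"
    using f unfolding sec_space_def by auto
  have A: "fs f (z + 1) = fs f z \<and> fs f (z + \<tau>) = fs f z" if z: "z \<notin> PS" for z
  proof -
    have cz: "cnj z \<notin> PS" using z PS_cnj by simp
    have q: "cnj z - \<tau> \<notin> PS" using PS_shift[OF lattice_uminus[OF lattice_tau], of "cnj z"] cz by simp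
    have "f (cnj z - \<tau> + \<tau>) = f (cnj z - \<tau>)" using per[OF q] by blast
    then have "f (cnj z - \<tau>) = f (cnj z)" by simp
    then show ?thesis using per[OF cz] by (simp add: fs_def cnj_tau)
  qed
  have B: "fs f holomorphic_on - PS"
  proof -
    have "{p. cnj p \<in> - PS} = - PS" using PS_cnj by auto
    then show ?thesis using hol_fs[OF hol PS_open] by simp
  qed
  have C: "pole_order_le (fs f) l m" if l: "l \<in> lattice \<tau>" for l
    by (rule pole_order_fs) (rule pl[OF lattice_cnj[OF l]])
  have E: "pole_order_le (fs f) (of_real d + l) 1" if l: "l \<in> lattice \<tau>" for l
  proof (rule pole_order_fs)
    have "cnj (of_real d + l) = of_real d + cnj l" by simp
    then show "pole_order_le f (cnj (of_real d + l)) 1" using pd[OF lattice_cnj[OF l]] by simp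
  qed
  show ?thesis unfolding sec_space_def using A B C E by blast
qed

definition "hh = (\<lambda>p. \<pi> p - fs \<pi> p)"

lemma ball_Diff_min: "u \<in> ball a (min r1 r2) - {a} \<Longrightarrow> u \<in> ball a r1 - {a} \<and> u \<in> ball a r2 - {a}"
  by auto

lemma hh_space: "sec_space \<tau> d (n - 1) hh"
proof -
  have fsp: "sec_space \<tau> d n (fs \<pi>)" by (rule sec_fs[OF pi_space])
  have per: "hh (z + 1) = hh z \<and> hh (z + \<tau>) = hh z" if "z \<notin> PS" for z
    using pi_space fsp that unfolding sec_space_def hh_def by simp
  have hol: "hh holomorphic_on - PS"
    unfolding hh_def using pi_hol fsp by (intro holomorphic_intros) (auto simp: sec_space_def)
  have pl: "pole_order_le hh l (n - 1)" if l: "l \<in> lattice \<tau>" for l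
  proof -
    obtain r1 G1 where r1: "r1 > 0" "G1 holomorphic_on ball l r1" "G1 l = 1"
      and e1: "\<And>u. u \<in> ball l r1 - {l} \<Longrightarrow> \<pi> u = G1 u / (u - l) ^ n"
      using pi_pole[OF l] by blast
    obtain r2 G2 where r2: "r2 > 0" "G2 holomorphic_on ball (cnj l) r2" "G2 (cnj l) = 1"
      and e2: "\<And>u. u \<in> ball (cnj l) r2 - {cnj l} \<Longrightarrow> \<pi> u = G2 u / (u - cnj l) ^ n"
      using pi_pole[OF lattice_cnj[OF l]] by blast
    have ballc: "{p. cnj p \<in> ball (cnj l) r2} = ball l r2"
      by (auto simp: dist_norm complex_cnj_diff[symmetric] simp del: complex_cnj_diff)
    have G2h: "fs G2 holomorphic_on ball l r2" using hol_fs[OF r2(2) open_ball] ballc by simp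
    define r where "r = min r1 r2"
    define \<Delta> where "\<Delta> = (\<lambda>u. G1 u - fs G2 u)"
    have r: "r > 0" using r1 r2 by (simp add: r_def)
    have a1: "G1 holomorphic_on ball l r" using r1(2) by (rule holomorphic_on_subset) (auto simp: r_def)
    have a2: "fs G2 holomorphic_on ball l r" using G2h by (rule holomorphic_on_subset) (auto simp: r_def)
    have Dh: "\<Delta> holomorphic_on ball l r"
      unfolding \<Delta>_def by (rule holomorphic_on_diff[OF a1 a2])
    have D0: "\<Delta> l = 0" using r1(3) r2(3) by (simp add: \<Delta>_def fs_def)
    define H where "H = (\<lambda>u. if u = l then deriv \<Delta> l else (\<Delta> u - \<Delta> l) / (u - l))"
    have Hh: "H holomorphic_on ball l r"
      unfolding H_def by (rule pole_lemma[OF Dh]) (use r in simp)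
    have "hh u = H u / (u - l) ^ (n - 1)" if u: "u \<in> ball l r - {l}" for u
    proof -
      have u1: "u \<in> ball l r1 - {l}" and u2: "cnj u \<in> ball (cnj l) r2 - {cnj l}"
        using u ballc by (auto simp: r_def)
      have "fs \<pi> u = cnj (G2 (cnj u) / (cnj u - cnj l) ^ n)" using e2[OF u2] by (simp add: fs_def)
      also have "\<dots> = fs G2 u / (u - l) ^ n" by (simp add: fs_def)
      finally have "hh u = \<Delta> u / (u - l) ^ n" using e1[OF u1] by (simp add: hh_def \<Delta>_def diff_divide_distrib)
      moreover have "(u - l) ^ n = (u - l) * (u - l) ^ (n - 1)" using n by (metis Suc_diff_1 less_le_trans zero_less_one power_Suc)
      moreover have "u \<noteq> l" using u by simp
      ultimately show ?thesis by (simp add: H_def D0)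
    qed
    then show ?thesis unfolding pole_order_le_def using r Hh by blast
  qed
  have pd: "pole_order_le hh (of_real d + l) 1" if l: "l \<in> lattice \<tau>" for l
  proof -
    let ?a = "of_real d + l"
    obtain r1 G1 where r1: "r1 > 0" "G1 holomorphic_on ball ?a r1"
      and e1: "\<And>u. u \<in> ball ?a r1 - {?a} \<Longrightarrow> \<pi> u = G1 u / (u - ?a) ^ 1"
      using pi_space l unfolding sec_space_def pole_order_le_def by blast
    obtain r2 G2 where r2: "r2 > 0" "G2 holomorphic_on ball ?a r2"
      and e2: "\<And>u. u \<in> ball ?a r2 - {?a} \<Longrightarrow> fs \<pi> u = G2 u / (u - ?a) ^ 1"
      using fsp l unfolding sec_space_def pole_order_le_def by blast
    define r where "r = min r1 r2"
    have r: "r > 0" using r1 r2 by (simp add: r_def)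
    have a1: "G1 holomorphic_on ball ?a r" using r1(2) by (rule holomorphic_on_subset) (auto simp: r_def)
    have a2: "G2 holomorphic_on ball ?a r" using r2(2) by (rule holomorphic_on_subset) (auto simp: r_def)
    have Gh: "(\<lambda>u. G1 u - G2 u) holomorphic_on ball ?a r"
      by (rule holomorphic_on_diff[OF a1 a2])
    have "hh u = (G1 u - G2 u) / (u - ?a) ^ 1" if u: "u \<in> ball ?a r - {?a}" for u
      using e1[of u] e2[of u] u by (simp add: hh_def r_def diff_divide_distrib)
    then show ?thesis unfolding pole_order_le_def using r Gh by blast
  qed
  show ?thesis unfolding sec_space_def using per hol pl pd by blast
qed

end

locale orth = pis +
  fixes w :: "complex \<Rightarrow> complex" and \<delta> :: real
  assumes delta: "\<delta> > 0"
    and w_hol: "w holomorphic_on {p. \<bar>Im p - Im \<tau> / 2\<bar> < \<delta>}"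
    and w_real: "\<forall>s::real. w (\<tau> / 2 + of_real s) \<in> \<real>"
    and pi_orth: "\<forall>f. sec_space \<tau> d (n - 1) f \<longrightarrow>
        contour_integral (linepath (\<tau> / 2) (\<tau> / 2 + 1)) (\<lambda>p. \<pi> p * f p * exp (w p)) = 0"
begin

lemma lin_aux: "(1 - u) *\<^sub>R (a::complex) + u *\<^sub>R (a + 1) = a + of_real u"
  by (simp add: scaleR_conv_of_real algebra_simps)

definition "gam s = \<tau> / 2 + complex_of_real s"
definition "strip = {p. \<bar>Im p - Im \<tau> / 2\<bar> < \<delta>}"

lemma Im_tau: "Im \<tau> = t" by (simp add: tau_eq)

lemma Im_gam: "Im (gam s) = t / 2" by (simp add: gam_def Im_tau)

lemma gam_S0: "gam s \<in> S0" using t_pos by (simp add: S0_def Im_gam)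

lemma gam_strip: "gam s \<in> strip" using delta by (simp add: strip_def Im_gam Im_tau)

lemma gam_not_PS: "gam s \<notin> PS" using S0_not_PS gam_S0 by blast

lemma seg_Im: assumes "x \<in> closed_segment (\<tau> / 2) (\<tau> / 2 + 1)" shows "Im x = t / 2"
proof -
  obtain u where "x = (1 - u) *\<^sub>R (\<tau> / 2) + u *\<^sub>R (\<tau> / 2 + 1)" using assms in_segment(1) by blast
  then have "x = \<tau> / 2 + of_real u" by (simp only: lin_aux)
  then show ?thesis by (simp add: Im_tau)
qed

lemma seg_sub: "closed_segment (\<tau> / 2) (\<tau> / 2 + 1) \<subseteq> S0 \<inter> strip"
proof
  fix x assume "x \<in> closed_segment (\<tau> / 2) (\<tau> / 2 + 1)"
  then have "Im x = t / 2" by (rule seg_Im)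
  then show "x \<in> S0 \<inter> strip" using t_pos delta by (simp add: S0_def strip_def Im_tau)
qed

lemma linepath_gam: "linepath (\<tau> / 2) (\<tau> / 2 + 1) x = gam x"
  unfolding linepath_def gam_def by (rule lin_aux)

lemma w_cont: "continuous_on strip w"
  using w_hol by (simp add: strip_def holomorphic_on_imp_continuous_on)

lemma exp_w_real: "exp (w (gam s)) = of_real (exp (Re (w (gam s))))"
proof -
  have "w (gam s) \<in> \<real>" using w_real by (simp add: gam_def)
  then have "w (gam s) = of_real (Re (w (gam s)))" by (simp add: complex_is_Real_iff complex_eq_iff)
  then have "exp (w (gam s)) = exp (of_real (Re (w (gam s))))" by metis
  then show ?thesis by (simp add: exp_of_real)
qed

lemma cont_gam: "continuous_on {0..1} gam"
  unfolding gam_def by (intro continuous_intros)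

lemma cont_comp_gam:
  assumes "continuous_on A f" "\<And>s. gam s \<in> A"
  shows "continuous_on {0..1} (\<lambda>s. f (gam s))"
  using continuous_on_compose[OF cont_gam continuous_on_subset[OF assms(1)]] assms(2)
  by (auto simp: o_def)

lemma sec_cont: "sec_space \<tau> d m f \<Longrightarrow> continuous_on (- PS) f"
  by (simp add: sec_space_def holomorphic_on_imp_continuous_on)

lemma orth_int:
  assumes f: "sec_space \<tau> d (n - 1) f"
  shows "((\<lambda>s. \<pi> (gam s) * f (gam s) * exp (w (gam s))) has_integral 0) {0..1}"
proof -
  let ?g = "\<lambda>p. \<pi> p * f p * exp (w p)"
  have c1: "continuous_on (S0 \<inter> strip) \<pi>"
    using holomorphic_on_imp_continuous_on[OF pi_hol_S0] by (rule continuous_on_subset) auto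
  have c2: "continuous_on (S0 \<inter> strip) f"
    using sec_cont[OF f] by (rule continuous_on_subset) (use S0_not_PS in auto)
  have cw: "continuous_on (S0 \<inter> strip) w" by (rule continuous_on_subset[OF w_cont]) auto
  have "continuous_on (S0 \<inter> strip) ?g" using c1 c2 cw by (intro continuous_intros)
  then have "continuous_on (closed_segment (\<tau> / 2) (\<tau> / 2 + 1)) ?g"
    using seg_sub by (rule continuous_on_subset)
  then have "?g contour_integrable_on linepath (\<tau> / 2) (\<tau> / 2 + 1)"
    by (rule contour_integrable_continuous_linepath)
  from has_contour_integral_integral[OF this]
  have "(?g has_contour_integral 0) (linepath (\<tau> / 2) (\<tau> / 2 + 1))" using pi_orth f by simp
  then show ?thesis unfolding has_contour_integral_linepath by (simp add: linepath_gam)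
qed

lemma sec_gam_cnj:
  assumes f: "sec_space \<tau> d m f"
  shows "fs f (gam s) = cnj (f (gam s))"
proof -
  have "cnj (gam s) = gam s - \<tau>" unfolding gam_def by (simp add: complex_eq_iff tau_eq)
  moreover have "gam s - \<tau> \<notin> PS"
    using PS_shift[OF lattice_uminus[OF lattice_tau], of "gam s"] gam_not_PS by simp
  moreover have "f (gam s - \<tau> + \<tau>) = f (gam s - \<tau>)"
  proof -
    have per: "\<forall>z. z \<notin> PS \<longrightarrow> f (z + 1) = f z \<and> f (z + \<tau>) = f z" using f by (simp add: sec_space_def)
    then show ?thesis using calculation(2) by blast
  qed
  ultimately show ?thesis by (simp add: fs_def)
qed

lemma pi_real: assumes s: "s \<in> {0..1}" shows "cnj (\<pi> (gam s)) = \<pi> (gam s)"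
proof -
  let ?A = "\<lambda>s. \<pi> (gam s)" and ?B = "\<lambda>s. hh (gam s)" and ?E = "\<lambda>s. exp (w (gam s))"
  have hs: "sec_space \<tau> d (n - 1) hh" by (rule hh_space)
  have fhs: "sec_space \<tau> d (n - 1) (fs hh)" by (rule sec_fs[OF hs])
  have I1: "((\<lambda>s. ?A s * cnj (?B s) * ?E s) has_integral 0) {0..1}"
    using orth_int[OF fhs] by (simp add: sec_gam_cnj[OF hs])
  have I2: "((\<lambda>s. ?A s * ?B s * ?E s) has_integral 0) {0..1}" by (rule orth_int[OF hs])
  have "((cnj \<circ> (\<lambda>s. ?A s * ?B s * ?E s)) has_integral cnj 0) {0..1}"
    using I2 by (simp only: has_integral_cnj)
  then have I3: "((\<lambda>s. cnj (?A s) * cnj (?B s) * ?E s) has_integral 0) {0..1}"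
    by (simp add: o_def exp_w_real)
  have "((\<lambda>s. ?A s * cnj (?B s) * ?E s - cnj (?A s) * cnj (?B s) * ?E s) has_integral 0 - 0) {0..1}"
    by (rule has_integral_diff[OF I1 I3])
  moreover have "?A s * cnj (?B s) * ?E s - cnj (?A s) * cnj (?B s) * ?E s
      = of_real ((cmod (?B s))^2 * exp (Re (w (gam s))))" for s
  proof -
    have eqB: "?A s - cnj (?A s) = ?B s" using sec_gam_cnj[OF pi_space] by (simp add: hh_def)
    have "?A s * cnj (?B s) * ?E s - cnj (?A s) * cnj (?B s) * ?E s = (?A s - cnj (?A s)) * cnj (?B s) * ?E s"
      by (simp add: algebra_simps)
    also have "\<dots> = ?B s * cnj (?B s) * ?E s" by (simp only: eqB)
    also have "\<dots> = of_real ((cmod (?B s))^2 * exp (Re (w (gam s))))"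
    proof -
      have "?B s * cnj (?B s) = of_real ((cmod (?B s))^2)" using complex_norm_square[of "?B s"] by simp
      then show ?thesis by (simp add: exp_w_real)
    qed
    finally show ?thesis .
  qed
  ultimately have I4: "((\<lambda>s. complex_of_real ((cmod (?B s))^2 * exp (Re (w (gam s))))) has_integral 0) {0..1}"
    by simp
  let ?phi = "\<lambda>s. (cmod (?B s))^2 * exp (Re (w (gam s)))"
  have cB: "continuous_on {0..1} ?B" by (rule cont_comp_gam[OF sec_cont[OF hs]]) (simp add: gam_not_PS)
  have cW: "continuous_on {0..1} (\<lambda>s. w (gam s))" by (rule cont_comp_gam[OF w_cont]) (rule gam_strip)
  have cphi: "continuous_on {0..1} ?phi" using cB cW by (intro continuous_intros)
  obtain I where I: "(?phi has_integral I) {0..1}"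
    using integrable_continuous_interval[OF cphi] by (auto simp: integrable_on_def)
  from has_integral_unique[OF has_integral_of_real[OF I] I4] have "I = 0" by simp
  with I have I0: "(?phi has_integral 0) (cbox 0 1)" by simp
  have "?phi s = 0"
    by (rule has_integral_0_cbox_imp_0[OF _ _ I0]) (use cphi s in auto)
  then have "?B s = 0" by simp
  then show ?thesis by (simp add: hh_def sec_gam_cnj[OF pi_space])
qed

lemma NZ: "\<not> (\<forall>s\<in>{0..1}. \<pi> (gam s) = 0)"
proof
  assume Z: "\<forall>s\<in>{0..1}. \<pi> (gam s) = 0"
  have lim: "gam (1/2) islimpt gam ` {0..1}"
    unfolding islimpt_approachable
  proof (intro allI impI)
    fix e :: real assume e: "e > 0"
    let ?x = "gam (1/2 + min (e/2) (1/4))"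
    have "?x \<in> gam ` {0..1}" by (intro imageI) (use e in \<open>auto simp: min_def\<close>)
    moreover have "?x \<noteq> gam (1/2)" using e by (simp add: gam_def)
    moreover have "dist ?x (gam (1/2)) < e" using e by (simp add: gam_def dist_norm)
    ultimately show "\<exists>x'\<in>gam ` {0..1}. x' \<noteq> gam (1/2) \<and> dist x' (gam (1/2)) < e" by blast
  qed
  have zero: "\<pi> p = 0" if p: "p \<in> S0" for p
    by (rule analytic_continuation[OF pi_hol_S0 S0_open S0_connected _ gam_S0 lim _ p])
       (use Z gam_S0 in auto)
  have lim0: "0 islimpt S0"
    unfolding islimpt_approachable
  proof (intro allI impI)
    fix e :: real assume e: "e > 0"
    let ?x = "\<i> * of_real (min (e/2) (t/2))"
    have "?x \<in> S0" using e t_pos by (simp add: S0_def)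
    moreover have "?x \<noteq> 0" using e t_pos by simp
    moreover have "dist ?x 0 < e" using e t_pos by (simp add: dist_norm norm_mult)
    ultimately show "\<exists>x'\<in>S0. x' \<noteq> 0 \<and> dist x' 0 < e" by blast
  qed
  have nb: "at 0 within S0 \<noteq> bot" using lim0 trivial_limit_within by blast
  have A: "((\<lambda>p. p ^ n * \<pi> p) \<longlongrightarrow> 1) (at 0 within S0)"
    by (rule tendsto_within_subset[OF pi_lim0]) simp
  have "eventually (\<lambda>p. p ^ n * \<pi> p = 0) (at 0 within S0)"
    by (simp add: eventually_at_filter zero)
  then have B: "((\<lambda>p. p ^ n * \<pi> p) \<longlongrightarrow> 0) (at 0 within S0)"
    by (rule tendsto_eventually)
  from tendsto_unique[OF nb A B] show False by simp
qed

lemma CONTRA: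
  assumes f: "sec_space \<tau> d (n - 1) f"
    and pos: "\<And>s. s \<in> {0..1} \<Longrightarrow> 0 \<le> Re (\<kappa> * (\<pi> (gam s) * f (gam s) * exp (w (gam s))))"
    and zer: "\<And>s. s \<in> {0..1} \<Longrightarrow> Re (\<kappa> * (\<pi> (gam s) * f (gam s) * exp (w (gam s)))) = 0 \<Longrightarrow> \<pi> (gam s) = 0"
  shows False
proof -
  let ?F = "\<lambda>s. \<pi> (gam s) * f (gam s) * exp (w (gam s))"
  let ?phi = "\<lambda>s. Re (\<kappa> * ?F s)"
  have "((\<lambda>s. \<kappa> * ?F s) has_integral \<kappa> * 0) {0..1}"
    by (rule has_integral_mult_right[OF orth_int[OF f]])
  from has_integral_linear[OF this bounded_linear_Re]
  have I0: "(?phi has_integral 0) (cbox 0 1)" by (simp add: o_def)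
  have cA: "continuous_on {0..1} (\<lambda>s. \<pi> (gam s))"
    by (rule cont_comp_gam[OF holomorphic_on_imp_continuous_on[OF pi_hol_S0]]) (rule gam_S0)
  have cf: "continuous_on {0..1} (\<lambda>s. f (gam s))" by (rule cont_comp_gam[OF sec_cont[OF f]]) (simp add: gam_not_PS)
  have cW: "continuous_on {0..1} (\<lambda>s. w (gam s))" by (rule cont_comp_gam[OF w_cont]) (rule gam_strip)
  have cphi: "continuous_on {0..1} ?phi" using cA cf cW by (intro continuous_intros)
  have "\<pi> (gam s) = 0" if s: "s \<in> {0..1}" for s
  proof -
    have "?phi s = 0"
      by (rule has_integral_0_cbox_imp_0[OF _ _ I0]) (use cphi s pos in auto)
    then show ?thesis using zer[OF s] by simp
  qed
  then show False using NZ by blast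
qed

end

lemma per_cont:
  fixes f :: "complex \<Rightarrow> complex"
  assumes c1: "isCont f x" and c2: "isCont f (x + c)"
    and ev: "eventually (\<lambda>u. f (u + c) = f u) (at x)"
  shows "f (x + c) = f x"
proof -
  have "isCont (\<lambda>u. u + c) x" by (intro continuous_intros)
  then have "isCont (\<lambda>u. f (u + c)) x" using c2 by (rule isCont_o2)
  then have A: "((\<lambda>u. f (u + c)) \<longlongrightarrow> f (x + c)) (at x)" by (simp add: isCont_def)
  have B: "((\<lambda>u. f (u + c)) \<longlongrightarrow> f x) (at x)"
    using c1 tendsto_cong[OF ev] by (simp add: isCont_def)
  from tendsto_unique[OF _ A B] show ?thesis by simp
qed

lemma hol_ball_imp_diff: "F holomorphic_on ball x r \<Longrightarrow> r > 0 \<Longrightarrow> F field_differentiable at x"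
  by (simp add: holomorphic_on_imp_differentiable_at)

lemma diff_transform:
  assumes "F field_differentiable at x" "r > 0" "\<And>u. u \<in> ball x r \<Longrightarrow> f u = F u"
  shows "f field_differentiable at x"
proof -
  have "f field_differentiable at x within UNIV"
  proof (rule field_differentiable_transform_within[OF assms(2) UNIV_I[of x], where f = F])
    show "\<And>x'. x' \<in> UNIV \<Longrightarrow> dist x' x < r \<Longrightarrow> F x' = f x'" using assms(3) by (simp add: dist_commute)
    show "F field_differentiable at x within UNIV" using assms(1) by simp
  qed
  then show ?thesis by simp
qed

lemma hol_of_diff: "(\<And>u. u \<in> S \<Longrightarrow> h field_differentiable at u) \<Longrightarrow> h holomorphic_on S"
  unfolding holomorphic_on_def using field_differentiable_at_within by blast

context pis begin

lemma GEN:
  fixes h :: "complex \<Rightarrow> complex" and Z0 :: "complex set"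
  assumes Zc: "closed Z0"
    and Zs: "\<And>p l. l \<in> lattice \<tau> \<Longrightarrow> p + l \<in> Z0 \<longleftrightarrow> p \<in> Z0"
    and Ziso: "\<And>x. eventually (\<lambda>p. p \<notin> Z0) (at x)"
    and Zl: "\<And>l. l \<in> lattice \<tau> \<Longrightarrow> l \<notin> Z0"
    and hd: "\<And>p. p \<notin> Z0 \<Longrightarrow> h field_differentiable at p"
    and hp: "\<And>p. p \<notin> Z0 \<Longrightarrow> h (p + 1) = h p \<and> h (p + \<tau>) = h p"
    and h0: "h 0 = 0"
    and ext: "\<And>x. x \<in> Z0 \<Longrightarrow> \<exists>r>0. \<exists>F. F holomorphic_on ball x r \<and>
                  (\<forall>u\<in>ball x r - {x}. u \<notin> Z0 \<and> u \<notin> PS \<and> \<pi> u * h u = F u)"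
  shows "sec_space \<tau> d (n - 1) (\<lambda>p. if p \<in> Z0 then Lim (at p) (\<lambda>u. \<pi> u * h u) else \<pi> p * h p)"
    (is "sec_space _ _ _ ?f")
proof -
  have hl: "h l = 0" if l: "l \<in> lattice \<tau>" for l
  proof -
    have "h (0 + l) = h 0"
      by (rule lat_periodic[where T = "- Z0"]) (use Zs hp Zl lattice_0 l in auto)
    then show ?thesis using h0 by simp
  qed
  have fx: "\<exists>r>0. \<exists>F. F holomorphic_on ball x r \<and> (\<forall>u\<in>ball x r. ?f u = F u)" if x: "x \<in> Z0" for x
  proof -
    obtain r F where r: "r > 0" and F: "F holomorphic_on ball x r"
      and eq: "\<And>u. u \<in> ball x r - {x} \<Longrightarrow> u \<notin> Z0 \<and> u \<notin> PS \<and> \<pi> u * h u = F u"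
      using ext[OF x] by blast
    have "isCont F x" using F r
      by (metis centre_in_ball continuous_on_eq_continuous_at holomorphic_on_imp_continuous_on open_ball)
    then have "(F \<longlongrightarrow> F x) (at x)" by (simp add: isCont_def)
    moreover have "eventually (\<lambda>u. \<pi> u * h u = F u) (at x)"
      unfolding eventually_at using r eq by (intro exI[of _ r]) (auto simp: dist_commute)
    ultimately have "((\<lambda>u. \<pi> u * h u) \<longlongrightarrow> F x) (at x)" by (simp add: tendsto_cong)
    then have "Lim (at x) (\<lambda>u. \<pi> u * h u) = F x" by (rule tendsto_Lim[rotated]) simp
    then have L: "Lim (at x) (\<lambda>u. \<pi> u * h u) = F x" .
    have "\<forall>u\<in>ball x r. ?f u = F u"
    proof
      fix u assume u: "u \<in> ball x r"
      show "?f u = F u"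
      proof (cases "u = x")
        case True then show ?thesis using L x by simp
      next
        case False
        then have "u \<in> ball x r - {x}" using u by simp
        from eq[OF this] show ?thesis by simp
      qed
    qed
    then show ?thesis using r F by blast
  qed
  have diffZ: "?f field_differentiable at x" if x: "x \<in> Z0" for x
  proof -
    obtain r F where r: "r > 0" "F holomorphic_on ball x r" and eq: "\<And>u. u \<in> ball x r \<Longrightarrow> ?f u = F u"
      using fx[OF x] by blast
    show ?thesis by (rule diff_transform[OF hol_ball_imp_diff[OF r(2) r(1)] r(1)]) (use eq in auto)
  qed
  have diffN: "?f field_differentiable at x" if x: "x \<notin> Z0" "x \<notin> PS" for x
  proof -
    have op: "open (- Z0 \<inter> - PS)" using Zc PS_closed by auto
    obtain r where r: "r > 0" "ball x r \<subseteq> - Z0 \<inter> - PS"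
      using open_contains_ball_eq[OF op] x by blast
    have "\<pi> field_differentiable at x"
      using pi_hol PS_open x by (simp add: holomorphic_on_imp_differentiable_at)
    then have "(\<lambda>u. \<pi> u * h u) field_differentiable at x"
      using hd[OF x(1)] by (rule field_differentiable_mult)
    then show ?thesis by (rule diff_transform[OF _ r(1)]) (use r(2) in auto)
  qed
  have S2: "?f holomorphic_on - PS"
    by (rule hol_of_diff) (use diffZ diffN in blast)
  have contf: "isCont ?f x" if "x \<notin> PS" for x
    using diffZ diffN that field_differentiable_imp_continuous_at by blast
  have perN: "?f (x + 1) = ?f x \<and> ?f (x + \<tau>) = ?f x" if x: "x \<notin> Z0" "x \<notin> PS" for x
  proof -
    have "x + 1 \<notin> Z0" "x + \<tau> \<notin> Z0" using Zs[OF lattice_1, of x] Zs[OF lattice_tau, of x] x by auto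
    then show ?thesis using x pi_per1[OF x(2)] hp[OF x(1)] by simp
  qed
  have S1: "?f (x + 1) = ?f x \<and> ?f (x + \<tau>) = ?f x" if x: "x \<notin> PS" for x
  proof (cases "x \<in> Z0")
    case False then show ?thesis using perN x by blast
  next
    case True
    have ev: "eventually (\<lambda>u. u \<notin> Z0 \<and> u \<notin> PS) (at x)"
      using eventually_conj[OF Ziso ev_not_PS] .
    have x1: "x + 1 \<notin> PS" "x + \<tau> \<notin> PS" using PS_shift[OF lattice_1, of x] PS_shift[OF lattice_tau, of x] x by auto
    have "?f (x + 1) = ?f x"
      by (rule per_cont[OF contf[OF x] contf[OF x1(1)]]) (rule eventually_mono[OF ev], use perN in blast)
    moreover have "?f (x + \<tau>) = ?f x"
      by (rule per_cont[OF contf[OF x] contf[OF x1(2)]]) (rule eventually_mono[OF ev], use perN in blast)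
    ultimately show ?thesis by blast
  qed
  have S3: "pole_order_le ?f l (n - 1)" if l: "l \<in> lattice \<tau>" for l
  proof -
    obtain r1 G where r1: "r1 > 0" "G holomorphic_on ball l r1"
      and e1: "\<And>u. u \<in> ball l r1 - {l} \<Longrightarrow> \<pi> u = G u / (u - l) ^ n"
      using pi_pole[OF l] by blast
    have op: "open (- Z0)" using Zc by auto
    obtain r2 where r2: "r2 > 0" "ball l r2 \<subseteq> - Z0"
      using open_contains_ball_eq[OF op] Zl[OF l] by blast
    define r where "r = min r1 r2"
    have r: "r > 0" using r1 r2 by (simp add: r_def)
    have hh: "h holomorphic_on ball l r"
      by (rule hol_of_diff) (use hd r2 in \<open>auto simp: r_def\<close>)
    define H where "H = (\<lambda>u. if u = l then deriv h l else (h u - h l) / (u - l))"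
    have Hh: "H holomorphic_on ball l r" unfolding H_def by (rule pole_lemma[OF hh]) (use r in simp)
    have Gh: "G holomorphic_on ball l r" using r1(2) by (rule holomorphic_on_subset) (auto simp: r_def)
    have "?f u = (G u * H u) / (u - l) ^ (n - 1)" if u: "u \<in> ball l r - {l}" for u
    proof -
      have uZ: "u \<notin> Z0" using u r2 by (auto simp: r_def)
      have "(u - l) ^ n = (u - l) * (u - l) ^ (n - 1)" using n by (metis Suc_diff_1 less_le_trans zero_less_one power_Suc)
      moreover have "u \<noteq> l" using u by simp
      moreover have "\<pi> u = G u / (u - l) ^ n" using e1 u by (auto simp: r_def)
      ultimately show ?thesis using uZ by (simp add: H_def hl[OF l])
    qed
    moreover have "(\<lambda>u. G u * H u) holomorphic_on ball l r" using Gh Hh by (rule holomorphic_on_mult)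
    ultimately show ?thesis unfolding pole_order_le_def using r by blast
  qed
  have S4: "pole_order_le ?f (of_real d + l) 1" if l: "l \<in> lattice \<tau>" for l
  proof (cases "of_real d + l \<in> Z0")
    case True
    obtain r F where r: "r > 0" "F holomorphic_on ball (of_real d + l) r"
      and eq: "\<And>u. u \<in> ball (of_real d + l) r \<Longrightarrow> ?f u = F u"
      using fx[OF True] by blast
    have "(\<lambda>u. (u - (of_real d + l)) * F u) holomorphic_on ball (of_real d + l) r"
      using r(2) by (intro holomorphic_intros)
    moreover have "?f u = (u - (of_real d + l)) * F u / (u - (of_real d + l)) ^ 1"
      if "u \<in> ball (of_real d + l) r - {of_real d + l}" for u
      using eq that by auto
    ultimately show ?thesis unfolding pole_order_le_def using r(1) by blast
  next
    case False
    let ?a = "of_real d + l"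
    obtain r1 G where r1: "r1 > 0" "G holomorphic_on ball ?a r1"
      and e1: "\<And>u. u \<in> ball ?a r1 - {?a} \<Longrightarrow> \<pi> u = G u / (u - ?a) ^ 1"
      using pi_space l unfolding sec_space_def pole_order_le_def by blast
    have op: "open (- Z0)" using Zc by auto
    obtain r2 where r2: "r2 > 0" "ball ?a r2 \<subseteq> - Z0"
      using open_contains_ball_eq[OF op] False by blast
    define r where "r = min r1 r2"
    have r: "r > 0" using r1 r2 by (simp add: r_def)
    have hh: "h holomorphic_on ball ?a r"
      by (rule hol_of_diff) (use hd r2 in \<open>auto simp: r_def\<close>)
    have Gh: "G holomorphic_on ball ?a r" using r1(2) by (rule holomorphic_on_subset) (auto simp: r_def)
    have "?f u = (G u * h u) / (u - ?a) ^ 1" if u: "u \<in> ball ?a r - {?a}" for u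
    proof -
      have uZ: "u \<notin> Z0" using u r2 by (auto simp: r_def)
      have "\<pi> u = G u / (u - ?a) ^ 1" using e1 u by (auto simp: r_def)
      then show ?thesis using uZ by simp
    qed
    moreover have "(\<lambda>u. G u * h u) holomorphic_on ball ?a r" using Gh hh by (rule holomorphic_on_mult)
    ultimately show ?thesis unfolding pole_order_le_def using r by blast
  qed
  show ?thesis unfolding sec_space_def using S1 S2 S3 S4 by blast
qed

end

lemma fd_shift:
  fixes q :: "complex \<Rightarrow> complex"
  assumes "q field_differentiable at (u - l)"
  shows "(\<lambda>u. q (u - l)) field_differentiable at u"
proof -
  have "((\<lambda>u. u - l) has_field_derivative 1) (at u)" by (auto intro!: derivative_eq_intros)
  then have "(\<lambda>u. u - l) field_differentiable at u" unfolding field_differentiable_def by blast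
  from field_differentiable_compose[OF this, of q] assms show ?thesis by (simp add: o_def)
qed

lemma hol_shift:
  assumes "q holomorphic_on ball z r"
  shows "(\<lambda>u. q (u - l)) holomorphic_on ball (z + l) r"
proof (rule hol_of_diff)
  fix u assume u: "u \<in> ball (z + l) r"
  then have "u - l \<in> ball z r" by (simp add: dist_norm algebra_simps)
  then have "q field_differentiable at (u - l)"
    using assms by (meson holomorphic_on_imp_differentiable_at open_ball)
  then show "(\<lambda>u. q (u - l)) field_differentiable at u" by (rule fd_shift)
qed

lemma ball_shift: fixes u z l :: complex shows "u \<in> ball (z + l) r - {z + l} \<longleftrightarrow> u - l \<in> ball z r - {z}"
proof -
  have "dist (z + l) u = dist z (u - l)" by (simp add: dist_norm algebra_simps)
  moreover have "u = z + l \<longleftrightarrow> u - l = z" by auto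
  ultimately show ?thesis by simp
qed

context pis begin

lemma zero_not_lattice:
  assumes Z: "is_zero_at \<pi> z"
  shows "z \<notin> lattice \<tau>"
proof
  assume l: "z \<in> lattice \<tau>"
  have A: "((\<lambda>u. (u - z) ^ n * \<pi> u) \<longlongrightarrow> 1) (at z)" by (rule pi_lim[OF l])
  have "((\<lambda>u. (u - z) ^ n) \<longlongrightarrow> (z - z) ^ n) (at z)" by (intro tendsto_intros)
  then have "((\<lambda>u. (u - z) ^ n) \<longlongrightarrow> 0) (at z)" using n by (simp add: power_0_left)
  from tendsto_mult[OF this Z[unfolded is_zero_at_def]]
  have B: "((\<lambda>u. (u - z) ^ n * \<pi> u) \<longlongrightarrow> 0) (at z)" by simp
  from tendsto_unique[OF _ A B] show False by simp
qed

lemma punct_not_PS: "\<exists>r>0. \<forall>u\<in>ball z r - {z}. u \<notin> PS"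
proof -
  obtain e where e: "e > 0" "\<And>u. u \<noteq> z \<Longrightarrow> dist u z < e \<Longrightarrow> u \<notin> PS"
    using ev_not_PS[of z] unfolding eventually_at by auto
  then show ?thesis by (intro exI[of _ e]) (auto simp: dist_commute)
qed

lemma local_hol:
  assumes Z: "is_zero_at \<pi> z"
  shows "\<exists>r>0. \<exists>P. P holomorphic_on ball z r \<and> P z = 0 \<and> (\<forall>u\<in>ball z r - {z}. u \<notin> PS \<and> \<pi> u = P u)"
proof -
  obtain r0 where r0: "r0 > 0" "\<And>u. u \<in> ball z r0 - {z} \<Longrightarrow> u \<notin> PS" using punct_not_PS by blast
  have zl: "z \<notin> lattice \<tau>" by (rule zero_not_lattice[OF Z])
  have "\<exists>r>0. \<exists>P. P holomorphic_on ball z r \<and> (\<forall>u\<in>ball z r - {z}. \<pi> u = P u)"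
  proof (cases "z \<in> PS")
    case False
    obtain r where r: "r > 0" "ball z r \<subseteq> - PS" using open_contains_ball_eq[OF PS_open] False by blast
    have "\<pi> holomorphic_on ball z r" using pi_hol r(2) by (rule holomorphic_on_subset)
    then show ?thesis using r(1) by blast
  next
    case True
    then have zd: "z - of_real d \<in> lattice \<tau>" using zl by (simp add: PS_eq tr_def)
    have "pole_order_le \<pi> (of_real d + (z - of_real d)) 1"
      using pi_space zd unfolding sec_space_def by blast
    then obtain r G where r: "r > 0" "G holomorphic_on ball z r"
      and e: "\<And>u. u \<in> ball z r - {z} \<Longrightarrow> \<pi> u = G u / (u - z) ^ 1"
      unfolding pole_order_le_def by auto
    have "G z = 0"
    proof (rule limit_of_factor[OF r])
      fix u assume "u \<in> ball z r - {z}"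
      then show "(u - z) * \<pi> u = G u" using e by simp
    next
      have "((\<lambda>u. u - z) \<longlongrightarrow> z - z) (at z)" by (intro tendsto_intros)
      from tendsto_mult[OF this Z[unfolded is_zero_at_def]]
      show "((\<lambda>u. (u - z) * \<pi> u) \<longlongrightarrow> 0) (at z)" by simp
    qed
    define P where "P = (\<lambda>u. if u = z then deriv G z else (G u - G z) / (u - z))"
    have "P holomorphic_on ball z r" unfolding P_def by (rule pole_lemma[OF r(2)]) (use r in simp)
    moreover have "\<forall>u\<in>ball z r - {z}. \<pi> u = P u" using e \<open>G z = 0\<close> by (simp add: P_def)
    ultimately show ?thesis using r(1) by blast
  qed
  then obtain r1 P where r1: "r1 > 0" "P holomorphic_on ball z r1" "\<And>u. u \<in> ball z r1 - {z} \<Longrightarrow> \<pi> u = P u"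
    by blast
  define r where "r = min r0 r1"
  have r: "r > 0" using r0 r1 by (simp add: r_def)
  have Ph: "P holomorphic_on ball z r" using r1(2) by (rule holomorphic_on_subset) (auto simp: r_def)
  have "P z = 0"
    by (rule limit_of_factor[OF r Ph _ Z[unfolded is_zero_at_def]]) (use r1(3) in \<open>auto simp: r_def\<close>)
  moreover have "\<forall>u\<in>ball z r - {z}. u \<notin> PS \<and> \<pi> u = P u" using r0(2) r1(3) by (auto simp: r_def)
  ultimately show ?thesis using r Ph by blast
qed

lemma double_zero:
  assumes Z: "is_zero_at \<pi> z" and NS: "\<not> simple_zero_at \<pi> z"
  shows "\<exists>r>0. \<exists>q. q holomorphic_on ball z r \<and> (\<forall>u\<in>ball z r - {z}. u \<notin> PS \<and> \<pi> u = (u - z)^2 * q u)"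
proof -
  obtain r P where r: "r > 0" and P: "P holomorphic_on ball z r" and P0: "P z = 0"
    and e: "\<And>u. u \<in> ball z r - {z} \<Longrightarrow> u \<notin> PS \<and> \<pi> u = P u"
    using local_hol[OF Z] by blast
  define g where "g = (\<lambda>u. if u = z then deriv P z else (P u - P z) / (u - z))"
  have g: "g holomorphic_on ball z r" unfolding g_def by (rule pole_lemma[OF P]) (use r in simp)
  have Pg: "P u = (u - z) * g u" if "u \<noteq> z" for u using that P0 by (simp add: g_def)
  have g0: "g z = 0"
  proof (rule ccontr)
    assume "g z \<noteq> 0"
    moreover have "\<forall>u\<in>ball z r - {z}. \<pi> u = (u - z) * g u" using e Pg by auto
    ultimately have "simple_zero_at \<pi> z" unfolding simple_zero_at_def using r g by blast
    with NS show False by blast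
  qed
  define q where "q = (\<lambda>u. if u = z then deriv g z else (g u - g z) / (u - z))"
  have q: "q holomorphic_on ball z r" unfolding q_def by (rule pole_lemma[OF g]) (use r in simp)
  have "\<forall>u\<in>ball z r - {z}. u \<notin> PS \<and> \<pi> u = (u - z)^2 * q u"
    using e Pg g0 by (auto simp: q_def power2_eq_square)
  then show ?thesis using r q by blast
qed

lemma factor_shift:
  assumes r: "r > 0" and q: "q holomorphic_on ball z r"
    and e: "\<forall>u\<in>ball z r - {z}. u \<notin> PS \<and> \<pi> u = (u - z)^m * q u"
    and l: "l \<in> lattice \<tau>"
  shows "\<exists>q'. q' holomorphic_on ball (z + l) r \<and> (\<forall>u\<in>ball (z + l) r - {z + l}. u \<notin> PS \<and> \<pi> u = (u - (z + l))^m * q' u)"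
proof (intro exI conjI ballI)
  show "(\<lambda>u. q (u - l)) holomorphic_on ball (z + l) r" by (rule hol_shift[OF q])
  fix u assume u: "u \<in> ball (z + l) r - {z + l}"
  then have u': "u - l \<in> ball z r - {z}" using ball_shift by blast
  have np: "u - l \<notin> PS" using e u' by blast
  then show "u \<notin> PS" using PS_shift[OF l, of "u - l"] by simp
  have "\<pi> ((u - l) + l) = \<pi> (u - l)" by (rule pi_per[OF np l])
  then show "\<pi> u = (u - (z + l))^m * q (u - l)" using e u' by (simp add: algebra_simps)
qed

lemma ext_local:
  assumes r: "r > 0" and q: "q holomorphic_on ball z r"
    and e: "\<And>u. u \<in> ball z r - {z} \<Longrightarrow> \<pi> u = (u - z)^m * q u"
    and hd: "\<And>u. u \<in> ball z r - {z} \<Longrightarrow> h field_differentiable at u"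
    and lim: "((\<lambda>u. (u - z)^m * h u) \<longlongrightarrow> L) (at z)"
  shows "\<exists>F. F holomorphic_on ball z r \<and> (\<forall>u\<in>ball z r - {z}. \<pi> u * h u = F u)"
proof -
  let ?Phi = "\<lambda>u. (u - z)^m * h u"
  have "?Phi holomorphic_on ball z r - {z}"
    by (rule hol_of_diff) (use hd in \<open>auto intro!: field_differentiable_mult field_differentiable_power field_differentiable_diff field_differentiable_ident field_differentiable_const\<close>)
  from removable_singularity[OF this open_ball lim]
  have Ph: "(\<lambda>y. if y = z then L else ?Phi y) holomorphic_on ball z r" .
  define F where "F = (\<lambda>u. q u * (if u = z then L else ?Phi u))"
  have "F holomorphic_on ball z r" unfolding F_def using q Ph by (rule holomorphic_on_mult)
  moreover have "\<pi> u * h u = F u" if "u \<in> ball z r - {z}" for u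
    using e[OF that] that by (simp add: F_def)
  ultimately show ?thesis by blast
qed

end

context lat begin

definition "cc = 2 * pi / t"
definition "QQ = exp cc"
definition Af :: "complex \<Rightarrow> complex \<Rightarrow> complex" where
  "Af a p = exp (complex_of_real cc * (p - a))"

lemma cc_pos: "cc > 0" using t_pos by (simp add: cc_def)
lemma QQ_gt1: "QQ > 1" using cc_pos by (simp add: QQ_def)
lemma cc_t: "cc * t = 2 * pi" using t_pos by (simp add: cc_def)

lemma A_ne0: "Af a p \<noteq> 0" by (simp add: Af_def)

lemma A_a: "Af a a = 1" by (simp add: Af_def)

lemma A_add1: "Af a (p + 1) = Af a p * of_real QQ"
proof -
  have "complex_of_real cc * (p + 1 - a) = complex_of_real cc * (p - a) + of_real cc" by (simp add: algebra_simps)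
  then show ?thesis by (simp add: Af_def QQ_def exp_add exp_of_real)
qed

lemma A_addtau: "Af a (p + \<tau>) = Af a p"
proof -
  have ct: "complex_of_real cc * \<tau> = \<i> * of_real (cc * t)" by (simp add: tau_eq)
  also have "\<dots> = 2 * of_real pi * \<i>" using cc_t by simp
  finally have "complex_of_real cc * (p + \<tau> - a) = complex_of_real cc * (p - a) + 2 * of_real pi * \<i>"
    by (simp add: algebra_simps)
  then show ?thesis by (simp add: Af_def exp_add)
qed

lemma exp_cc_eq1: assumes "exp (complex_of_real cc * v) = 1" shows "v \<in> lattice \<tau>"
proof -
  obtain m :: int where re: "Re (complex_of_real cc * v) = 0" and im: "Im (complex_of_real cc * v) = of_int (2 * m) * pi"
    using assms exp_eq_1 by blast
  have "Re v = 0" using re cc_pos by simp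
  moreover have "Im v = of_int m * t" using im cc_pos t_pos by (simp add: cc_def field_simps)
  ultimately show ?thesis using t_pos by (simp add: lattice_iff)
qed

lemma A_np:
  assumes p: "p \<notin> tr \<tau> a"
  shows "\<And>k. Af a p * of_real QQ ^ k \<noteq> 1" "\<And>k. Af a p / of_real QQ ^ Suc k \<noteq> 1"
proof -
  fix k :: nat
  have q: "complex_of_real QQ ^ j = exp (of_nat j * of_real cc)" for j
    by (simp add: QQ_def exp_of_real exp_of_nat_mult)
  have e1: "Af a p * of_real QQ ^ k = exp (complex_of_real cc * (p - a + of_nat k))"
    unfolding Af_def q mult_exp_exp by (simp add: algebra_simps)
  show "Af a p * of_real QQ ^ k \<noteq> 1"
  proof
    assume "Af a p * of_real QQ ^ k = 1"
    then have "p - a + of_nat k \<in> lattice \<tau>" using e1 exp_cc_eq1 by simp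
    then have "p - a + of_nat k - of_int (int k) \<in> lattice \<tau>"
      using lattice_diff lattice_intro[of "int k" 0] by (metis add.right_neutral mult_zero_left of_int_0)
    then show False using p by (simp add: tr_def)
  qed
  have e2: "Af a p / of_real QQ ^ Suc k = exp (complex_of_real cc * (p - a - of_nat (Suc k)))"
    unfolding Af_def q exp_diff[symmetric] by (simp add: algebra_simps)
  show "Af a p / of_real QQ ^ Suc k \<noteq> 1"
  proof
    assume "Af a p / of_real QQ ^ Suc k = 1"
    then have "p - a - of_nat (Suc k) \<in> lattice \<tau>" using e2 exp_cc_eq1 by simp
    then have "p - a - of_nat (Suc k) + of_int (int (Suc k)) \<in> lattice \<tau>"
      using lattice_add lattice_intro[of "int (Suc k)" 0] by (metis add.right_neutral mult_zero_left of_int_0)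
    then show False using p by (simp add: tr_def)
  qed
qed

lemma A_deriv: "(Af a has_field_derivative of_real cc * Af a p) (at p)"
  unfolding Af_def[abs_def] by (auto intro!: derivative_eq_intros)

lemma A_diff: "Af a field_differentiable at p"
  using A_deriv unfolding field_differentiable_def by blast

lemma A_cont: "isCont (Af a) p"
  by (rule field_differentiable_imp_continuous_at[OF A_diff])

lemma A_lim: "((\<lambda>u. (u - a) / (Af a u - 1)) \<longlongrightarrow> 1 / of_real cc) (at a)"
proof -
  have "((\<lambda>u. (Af a u - Af a a) / (u - a)) \<longlongrightarrow> of_real cc * Af a a) (at a)"
    using A_deriv[of a a] by (simp add: has_field_derivative_iff)
  then have "((\<lambda>u. (Af a u - 1) / (u - a)) \<longlongrightarrow> of_real cc) (at a)" by (simp add: A_a)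
  from tendsto_inverse[OF this] have "((\<lambda>u. inverse ((Af a u - 1) / (u - a))) \<longlongrightarrow> inverse (of_real cc)) (at a)"
    using cc_pos by simp
  then show ?thesis by (simp add: inverse_eq_divide)
qed

definition "Kf a p = Kser QQ (Af a p)"
definition "Lf a b p = Lser QQ (Af a p) - Lser QQ (Af b p)"

lemma Kf_diff: "p \<notin> tr \<tau> a \<Longrightarrow> Kf a field_differentiable at p"
  unfolding Kf_def[abs_def]
  using field_differentiable_compose[OF A_diff Kser_diff[OF QQ_gt1 A_ne0 A_np]] by (simp add: o_def)

lemma Lser_A_diff: "p \<notin> tr \<tau> a \<Longrightarrow> (\<lambda>u. Lser QQ (Af a u)) field_differentiable at p"
  using field_differentiable_compose[OF A_diff Lser_diff[OF QQ_gt1 A_ne0 A_np]] by (simp add: o_def)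

lemma Lf_diff: "p \<notin> tr \<tau> a \<Longrightarrow> p \<notin> tr \<tau> b \<Longrightarrow> Lf a b field_differentiable at p"
  unfolding Lf_def[abs_def] by (intro field_differentiable_diff Lser_A_diff)

lemma Kf_per: "Kf a (p + 1) = Kf a p \<and> Kf a (p + \<tau>) = Kf a p"
  by (simp add: Kf_def A_add1 A_addtau Kser_shift[OF QQ_gt1 A_ne0])

lemma A_ne1: "p \<notin> tr \<tau> a \<Longrightarrow> Af a p \<noteq> 1"
  using A_np(1)[of p a 0] by simp

lemma Lf_per: "p \<notin> tr \<tau> a \<Longrightarrow> p \<notin> tr \<tau> b \<Longrightarrow> Lf a b (p + 1) = Lf a b p \<and> Lf a b (p + \<tau>) = Lf a b p"
  by (simp add: Lf_def A_add1 A_addtau Lser_shift[OF QQ_gt1 A_ne0 A_ne1])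

lemma Rser_A_cont:
  assumes Bp: "BP \<rho>p" and Hp: "HO \<rho>p" and Bm: "BM \<rho>m" and Hm: "HO \<rho>m"
  shows "isCont (\<lambda>u. Rser \<rho>p \<rho>m QQ (Af a u)) a"
proof -
  have np1: "1 * of_real QQ ^ Suc k \<noteq> (1::complex)" for k
  proof -
    have "QQ ^ Suc k > 1" using QQ_gt1 by (intro one_less_power) auto
    then show ?thesis by (metis mult_1 of_real_eq_1_iff of_real_power less_irrefl)
  qed
  have np2: "1 / of_real QQ ^ Suc k \<noteq> (1::complex)" for k
  proof -
    have "QQ ^ Suc k > 1" using QQ_gt1 by (intro one_less_power) auto
    then show ?thesis by (metis div_by_1 divide_eq_1_iff of_real_eq_1_iff of_real_power less_irrefl)
  qed
  have "Rser \<rho>p \<rho>m QQ field_differentiable at 1"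
    by (rule Rser_diff[OF QQ_gt1 Bp Hp Bm Hm _ np1 np2]) simp
  then have "isCont (Rser \<rho>p \<rho>m QQ) (Af a a)" by (simp add: A_a field_differentiable_imp_continuous_at)
  from isCont_o2[OF A_cont this] show ?thesis .
qed

lemma ev_ne: "eventually (\<lambda>u. u \<noteq> a) (at a)"
  by (simp add: eventually_at_filter)

lemma Kf_lim: "((\<lambda>u. (u - a)^2 * Kf a u) \<longlongrightarrow> (1 / of_real cc)^2) (at a)"
proof -
  have R: "((\<lambda>u. Rser kap kap QQ (Af a u)) \<longlongrightarrow> Rser kap kap QQ (Af a a)) (at a)"
    using Rser_A_cont[OF BP_kap HO_kap BM_kap HO_kap] by (simp add: isCont_def)
  have Z: "((\<lambda>u. (u - a)^2) \<longlongrightarrow> (a - a)^2) (at a)" by (intro tendsto_intros)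
  have A: "((\<lambda>u. Af a u) \<longlongrightarrow> Af a a) (at a)" using A_cont by (simp add: isCont_def)
  have T: "((\<lambda>u. Af a u * ((u - a) / (Af a u - 1))^2 + (u - a)^2 * Rser kap kap QQ (Af a u))
      \<longlongrightarrow> Af a a * (1 / of_real cc)^2 + (a - a)^2 * Rser kap kap QQ (Af a a)) (at a)"
    by (intro tendsto_intros A A_lim Z R)
  have "eventually (\<lambda>u. Af a u * ((u - a) / (Af a u - 1))^2 + (u - a)^2 * Rser kap kap QQ (Af a u)
      = (u - a)^2 * Kf a u) (at a)"
  proof (rule eventually_mono[OF ev_ne])
    fix u assume u: "u \<noteq> a"
    have "Kf a u = kap (Af a u) + Rser kap kap QQ (Af a u)"
      unfolding Kf_def by (rule Kser_split[OF QQ_gt1 A_ne0])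
    then show "Af a u * ((u - a) / (Af a u - 1))^2 + (u - a)^2 * Rser kap kap QQ (Af a u) = (u - a)^2 * Kf a u"
      by (simp add: kap_def power_divide algebra_simps)
  qed
  from tendsto_cong[OF this] T show ?thesis by (simp add: A_a)
qed

lemma Lf_lim_a:
  assumes ab: "a \<notin> tr \<tau> b"
  shows "((\<lambda>u. (u - a) * Lf a b u) \<longlongrightarrow> 1 / of_real cc) (at a)"
proof -
  have R: "((\<lambda>u. Rser lp lm QQ (Af a u)) \<longlongrightarrow> Rser lp lm QQ (Af a a)) (at a)"
    using Rser_A_cont[OF BP_lp HO_lp BM_lm HO_lm] by (simp add: isCont_def)
  have B: "((\<lambda>u. Lser QQ (Af b u)) \<longlongrightarrow> Lser QQ (Af b a)) (at a)"
    using field_differentiable_imp_continuous_at[OF Lser_A_diff[OF ab]] by (simp add: isCont_def)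
  have Z: "((\<lambda>u. u - a) \<longlongrightarrow> a - a) (at a)" by (intro tendsto_intros)
  have T: "((\<lambda>u. (u - a) / (Af a u - 1) + (u - a) * Rser lp lm QQ (Af a u) - (u - a) * Lser QQ (Af b u))
      \<longlongrightarrow> 1 / of_real cc + (a - a) * Rser lp lm QQ (Af a a) - (a - a) * Lser QQ (Af b a)) (at a)"
    by (intro tendsto_intros A_lim Z R B)
  have "eventually (\<lambda>u. (u - a) / (Af a u - 1) + (u - a) * Rser lp lm QQ (Af a u) - (u - a) * Lser QQ (Af b u)
      = (u - a) * Lf a b u) (at a)"
  proof (rule eventually_mono[OF ev_ne])
    fix u assume u: "u \<noteq> a"
    have "Lser QQ (Af a u) = lp (Af a u) + Rser lp lm QQ (Af a u)" by (rule Lser_split[OF QQ_gt1 A_ne0])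
    then show "(u - a) / (Af a u - 1) + (u - a) * Rser lp lm QQ (Af a u) - (u - a) * Lser QQ (Af b u) = (u - a) * Lf a b u"
      by (simp add: Lf_def lp_def algebra_simps)
  qed
  from tendsto_cong[OF this] T show ?thesis by simp
qed

lemma Lf_lim_b:
  assumes ba: "b \<notin> tr \<tau> a"
  shows "((\<lambda>u. (u - b) * Lf a b u) \<longlongrightarrow> - (1 / of_real cc)) (at b)"
proof -
  have "Lf a b u = - Lf b a u" for u by (simp add: Lf_def)
  with tendsto_minus[OF Lf_lim_a[OF ba, of]] show ?thesis by simp
qed

end

context lat begin

lemma Re_Af: "Re (Af a p) = exp (cc * Re (p - a)) * cos (cc * Im (p - a))"
  by (simp add: Af_def Re_exp)
lemma Im_Af: "Im (Af a p) = exp (cc * Re (p - a)) * sin (cc * Im (p - a))"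
  by (simp add: Af_def Im_exp)

lemma cc_half: "cc * (t / 2) = pi" using cc_t by (simp add: field_simps)

lemma Af_real_pos: "Im (p - a) = 0 \<Longrightarrow> Af a p = of_real (exp (cc * Re (p - a)))"
  by (simp add: complex_eq_iff Re_Af Im_Af)

lemma Af_cis: "Af a p = of_real (exp (cc * Re (p - a))) * (of_real (cos (cc * Im (p - a))) + \<i> * of_real (sin (cc * Im (p - a))))"
  by (simp add: complex_eq_iff Re_Af Im_Af)

lemma Af_real_neg:
  assumes "Im (p - a) = t / 2 \<or> Im (p - a) = - (t / 2)"
  shows "Af a p = of_real (- exp (cc * Re (p - a)))"
proof -
  have "cc * Im (p - a) = pi \<or> cc * Im (p - a) = - pi"
  proof (cases "Im (p - a) = t / 2")
    case True
    then have h: "cc * Im (p - a) = cc * (t / 2)" by (simp only:)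
    have "cc * Im (p - a) = pi" by (simp only: h cc_half)
    then show ?thesis by (rule disjI1)
  next
    case False then have i: "Im (p - a) = - (t / 2)" using assms by simp
    have h: "cc * Im (p - a) = - (cc * (t / 2))" by (simp only: i mult_minus_right)
    have "cc * Im (p - a) = - pi" by (simp only: h cc_half)
    then show ?thesis by (rule disjI2)
  qed
  then have c: "cos (cc * Im (p - a)) = -1" and s: "sin (cc * Im (p - a)) = 0" by auto
  show ?thesis unfolding Af_cis c s by simp
qed

lemma Af_shift_a: "Af (a + \<tau>) p = Af a p"
proof -
  have "Af a ((p - \<tau>) + \<tau>) = Af a (p - \<tau>)" by (rule A_addtau)
  then show ?thesis by (simp add: Af_def algebra_simps)
qed

lemma cnj_Af: "cnj (Af a p) = Af (cnj a) (cnj p)"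
  by (simp add: Af_def exp_cnj)

end

context pis begin

lemma ext_trans:
  assumes Zs: "\<And>p l. l \<in> lattice \<tau> \<Longrightarrow> p + l \<in> Z0 \<longleftrightarrow> p \<in> Z0"
    and hper: "\<And>p l. p \<notin> Z0 \<Longrightarrow> l \<in> lattice \<tau> \<Longrightarrow> h (p + l) = h p"
    and r: "r > 0" and F: "F holomorphic_on ball z r"
    and e: "\<forall>u\<in>ball z r - {z}. u \<notin> Z0 \<and> u \<notin> PS \<and> \<pi> u * h u = F u"
    and l: "l \<in> lattice \<tau>"
  shows "\<exists>r>0. \<exists>F. F holomorphic_on ball (z + l) r \<and> (\<forall>u\<in>ball (z + l) r - {z + l}. u \<notin> Z0 \<and> u \<notin> PS \<and> \<pi> u * h u = F u)"
proof (intro exI conjI ballI)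
  show "r > 0" by (rule r)
  show "(\<lambda>u. F (u - l)) holomorphic_on ball (z + l) r" by (rule hol_shift[OF F])
  fix u assume u: "u \<in> ball (z + l) r - {z + l}"
  then have u': "u - l \<in> ball z r - {z}" using ball_shift by blast
  have a: "u - l \<notin> Z0" and b: "u - l \<notin> PS" and c: "\<pi> (u - l) * h (u - l) = F (u - l)" using e u' by auto
  show "u \<notin> Z0" using Zs[OF l, of "u - l"] a by simp
  show "u \<notin> PS" using PS_shift[OF l, of "u - l"] b by simp
  have "\<pi> ((u - l) + l) = \<pi> (u - l)" by (rule pi_per[OF b l])
  moreover have "h ((u - l) + l) = h (u - l)" by (rule hper[OF a l])
  ultimately show "\<pi> u * h u = F (u - l)" using c by simp
qed

lemma pi_zero_factor:
  assumes zP: "z \<notin> PS" and r: "r > 0" and q: "q holomorphic_on ball z r"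
    and e: "\<forall>u\<in>ball z r - {z}. u \<notin> PS \<and> \<pi> u = (u - z)^2 * q u"
  shows "\<pi> z = 0"
proof -
  have "isCont \<pi> z" using pi_hol PS_open zP
    by (meson ComplI field_differentiable_imp_continuous_at holomorphic_on_imp_differentiable_at)
  then have A: "(\<pi> \<longlongrightarrow> \<pi> z) (at z)" by (simp add: isCont_def)
  have qc: "isCont q z" using q r
    by (metis centre_in_ball continuous_on_eq_continuous_at holomorphic_on_imp_continuous_on open_ball)
  have "((\<lambda>u. (u - z)^2 * q u) \<longlongrightarrow> (z - z)^2 * q z) (at z)"
    using qc by (intro tendsto_intros) (simp add: isCont_def)
  moreover have "eventually (\<lambda>u. (u - z)^2 * q u = \<pi> u) (at z)"
    unfolding eventually_at using r e by (intro exI[of _ r]) (auto simp: dist_commute)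
  ultimately have B: "(\<pi> \<longlongrightarrow> 0) (at z)" by (simp add: tendsto_cong)
  from tendsto_unique[OF _ A B] show ?thesis by simp
qed

lemma isolated_ball:
  assumes "x \<in> tr \<tau> a"
  shows "\<forall>u\<in>ball x (min 1 t) - {x}. u \<notin> tr \<tau> a"
  using tr_isolated[OF assms] by (auto simp: dist_commute)

end

lemma sign_gen:
  fixes P H E \<kappa> :: complex
  assumes P: "Im P = 0" and H: "\<kappa> * H = of_real c" "c > 0" and E: "E = of_real e" "e > 0"
  shows "0 \<le> Re (\<kappa> * (P * (P * H) * E))" "Re (\<kappa> * (P * (P * H) * E)) = 0 \<Longrightarrow> P = 0"
proof -
  have Pr: "P = of_real (Re P)" using P by (simp add: complex_eq_iff)
  have eq: "\<kappa> * (P * (P * H) * E) = of_real (c * (Re P)^2 * e)"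
  proof -
    have "\<kappa> * (P * (P * H) * E) = (\<kappa> * H) * P * P * E" by (simp add: algebra_simps)
    also have "\<dots> = of_real c * of_real (Re P) * of_real (Re P) * of_real e" using H E Pr by metis
    also have "\<dots> = of_real (c * (Re P)^2 * e)" by (simp add: power2_eq_square)
    finally show ?thesis .
  qed
  show "0 \<le> Re (\<kappa> * (P * (P * H) * E))" unfolding eq using H E by simp
  assume "Re (\<kappa> * (P * (P * H) * E)) = 0"
  then have "c * (Re P)^2 * e = 0" unfolding eq by simp
  then have "Re P = 0" using H E by simp
  then show "P = 0" using P by (simp add: complex_eq_iff)
qed

context orth begin

lemma not_tr_lattice: "z \<notin> lattice \<tau> \<Longrightarrow> l \<in> lattice \<tau> \<Longrightarrow> l \<notin> tr \<tau> z"
proof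
  assume z: "z \<notin> lattice \<tau>" and l: "l \<in> lattice \<tau>" and "l \<in> tr \<tau> z"
  then have "l - z \<in> lattice \<tau>" by (simp add: tr_def)
  from lattice_diff[OF l this] z show False by simp
qed

lemma real_np:
  assumes "complex_of_real x * of_real QQ ^ k \<noteq> 1" shows "x * QQ ^ k \<noteq> 1"
  using assms by (metis of_real_1 of_real_mult of_real_power)

lemma real_np2:
  assumes "complex_of_real x / of_real QQ ^ Suc k \<noteq> 1" shows "x / QQ ^ Suc k \<noteq> 1"
  using assms by (metis of_real_1 of_real_divide of_real_power)

lemma Kser_pos_Af:
  assumes p: "p \<notin> tr \<tau> a" and im: "Im (p - a) = 0"
  shows "Im (Kf a p) = 0" "Re (Kf a p) > 0"
proof -
  let ?x = "exp (cc * Re (p - a))"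
  have A: "Af a p = of_real ?x" by (rule Af_real_pos[OF im])
  have np1: "?x * QQ ^ k \<noteq> 1" for k using A_np(1)[OF p, of k] A by (intro real_np) simp
  have np2: "?x / QQ ^ Suc k \<noteq> 1" for k using A_np(2)[OF p, of k] A by (intro real_np2) simp
  show "Im (Kf a p) = 0" "Re (Kf a p) > 0"
    unfolding Kf_def A using Kser_pos[OF QQ_gt1 _ np1 np2] by auto
qed

lemma Kser_neg_Af:
  assumes im: "Im (p - a) = t / 2 \<or> Im (p - a) = - (t / 2)"
  shows "Im (Kf a p) = 0" "Re (Kf a p) < 0"
proof -
  let ?x = "- exp (cc * Re (p - a))"
  have A: "Af a p = of_real ?x" by (rule Af_real_neg[OF im])
  show "Im (Kf a p) = 0" "Re (Kf a p) < 0"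
    unfolding Kf_def A using Kser_neg[OF QQ_gt1, of ?x] by auto
qed

lemma caseK:
  assumes zl: "z \<notin> lattice \<tau>" and r: "r > 0" and q: "q holomorphic_on ball z r"
    and e: "\<forall>u\<in>ball z r - {z}. u \<notin> PS \<and> \<pi> u = (u - z)^2 * q u"
    and Imz: "Im z = 0 \<or> Im z = t / 2"
  shows False
proof -
  define Z0 where "Z0 = tr \<tau> z"
  define h where "h = (\<lambda>p. Kf z p - Kf z 0)"
  have Zs: "\<And>p l. l \<in> lattice \<tau> \<Longrightarrow> p + l \<in> Z0 \<longleftrightarrow> p \<in> Z0" unfolding Z0_def by (rule tr_shift)
  have Zc: "closed Z0" unfolding Z0_def by (rule tr_closed)
  have Ziso: "\<And>x. eventually (\<lambda>p. p \<notin> Z0) (at x)" unfolding Z0_def by (rule ev_not_tr)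
  have Zl: "\<And>l. l \<in> lattice \<tau> \<Longrightarrow> l \<notin> Z0" unfolding Z0_def using not_tr_lattice[OF zl] by blast
  have hd: "\<And>p. p \<notin> Z0 \<Longrightarrow> h field_differentiable at p"
    unfolding h_def Z0_def by (intro field_differentiable_diff Kf_diff field_differentiable_const)
  have hp: "\<And>p. p \<notin> Z0 \<Longrightarrow> h (p + 1) = h p \<and> h (p + \<tau>) = h p"
    unfolding h_def using Kf_per by simp
  have hper: "\<And>p l. p \<notin> Z0 \<Longrightarrow> l \<in> lattice \<tau> \<Longrightarrow> h (p + l) = h p"
    by (rule lat_periodic[where T = "- Z0"]) (use Zs hp in auto)
  have h0: "h 0 = 0" by (simp add: h_def)
  define r1 where "r1 = min r (min 1 t)"
  have r1: "r1 > 0" using r t_pos by (simp add: r1_def)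
  have q1: "q holomorphic_on ball z r1" using q by (rule holomorphic_on_subset) (auto simp: r1_def)
  have iso: "\<And>u. u \<in> ball z r1 - {z} \<Longrightarrow> u \<notin> Z0"
    using isolated_ball[of z z] by (auto simp: Z0_def r1_def tr_def lattice_0)
  have lim: "((\<lambda>u. (u - z)^2 * h u) \<longlongrightarrow> (1 / of_real cc)^2 - 0 * Kf z 0) (at z)"
  proof -
    have Z: "((\<lambda>u. (u - z)^2) \<longlongrightarrow> (z - z)^2) (at z)" by (intro tendsto_intros)
    have "((\<lambda>u. (u - z)^2 * Kf z u - (u - z)^2 * Kf z 0) \<longlongrightarrow> (1 / of_real cc)^2 - (z - z)^2 * Kf z 0) (at z)"
      by (intro tendsto_intros Kf_lim Z)
    then show ?thesis by (simp add: h_def algebra_simps)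
  qed
  obtain F where F: "F holomorphic_on ball z r1" and Fe: "\<forall>u\<in>ball z r1 - {z}. \<pi> u * h u = F u"
    using ext_local[OF r1 q1 _ _ lim] e iso hd by (auto simp: r1_def)
  have base: "\<forall>u\<in>ball z r1 - {z}. u \<notin> Z0 \<and> u \<notin> PS \<and> \<pi> u * h u = F u"
    using iso e Fe by (auto simp: r1_def)
  have ext: "\<exists>r>0. \<exists>F. F holomorphic_on ball x r \<and> (\<forall>u\<in>ball x r - {x}. u \<notin> Z0 \<and> u \<notin> PS \<and> \<pi> u * h u = F u)"
    if x: "x \<in> Z0" for x
  proof -
    have l: "x - z \<in> lattice \<tau>" using x by (simp add: Z0_def tr_def)
    from ext_trans[OF Zs hper r1 F base l] show ?thesis by simp
  qed
  define f where "f = (\<lambda>p. if p \<in> Z0 then Lim (at p) (\<lambda>u. \<pi> u * h u) else \<pi> p * h p)"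
  have fsp: "sec_space \<tau> d (n - 1) f" unfolding f_def
    by (rule GEN[OF Zc Zs Ziso Zl hd hp h0 ext])
  define \<sigma> :: real where "\<sigma> = (if Im z = 0 then -1 else 1)"
  have hsign: "Im (h (gam s)) = 0 \<and> \<sigma> * Re (h (gam s)) > 0" if s: "gam s \<notin> Z0" for s
  proof (cases "Im z = 0")
    case True
    have a: "Im (gam s - z) = t / 2" using True by (simp add: Im_gam)
    have b: "Im (0 - z) = 0" using True by simp
    have 0: "0 \<notin> tr \<tau> z" using Zl lattice_0 by (simp add: Z0_def)
    show ?thesis using Kser_neg_Af[of "gam s" z] a Kser_pos_Af[OF 0 b] True
      by (simp add: h_def \<sigma>_def)
  next
    case False
    then have Iz: "Im z = t / 2" using Imz by simp
    have a: "Im (gam s - z) = 0" using Iz by (simp add: Im_gam)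
    have b: "Im (0 - z) = - (t / 2)" using Iz by simp
    have g: "gam s \<notin> tr \<tau> z" using s by (simp add: Z0_def)
    show ?thesis using Kser_pos_Af[OF g a] Kser_neg_Af[of 0 z] b False
      by (simp add: h_def \<sigma>_def)
  qed
  have piZ: "\<pi> (gam s) = 0" if s: "gam s \<in> Z0" for s
  proof -
    have l: "gam s - z \<in> lattice \<tau>" using s by (simp add: Z0_def tr_def)
    have "z \<notin> PS" using PS_shift[OF l, of z] gam_not_PS by simp
    then have "\<pi> z = 0" by (rule pi_zero_factor[OF _ r q e])
    moreover have "\<pi> (z + (gam s - z)) = \<pi> z" by (rule pi_per[OF \<open>z \<notin> PS\<close> l])
    ultimately show ?thesis by simp
  qed
  have conds: "0 \<le> Re (of_real \<sigma> * (\<pi> (gam s) * f (gam s) * exp (w (gam s))))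
      \<and> (Re (of_real \<sigma> * (\<pi> (gam s) * f (gam s) * exp (w (gam s)))) = 0 \<longrightarrow> \<pi> (gam s) = 0)"
    if s: "s \<in> {0..1}" for s
  proof (cases "gam s \<in> Z0")
    case True then show ?thesis using piZ by simp
  next
    case False
    have fv: "f (gam s) = \<pi> (gam s) * h (gam s)" using False by (simp add: f_def)
    have P: "Im (\<pi> (gam s)) = 0" using pi_real[OF s] by (metis Reals_cnj_iff complex_is_Real_iff)
    have H: "of_real \<sigma> * h (gam s) = of_real (\<sigma> * Re (h (gam s)))"
      using hsign[OF False] by (simp add: complex_eq_iff)
    have E: "exp (w (gam s)) = of_real (exp (Re (w (gam s))))" by (rule exp_w_real)
    show ?thesis unfolding fv
      using sign_gen[OF P H _ E] hsign[OF False] by simp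
  qed
  show False
    by (rule CONTRA[OF fsp, of "of_real \<sigma>"]) (use conds in auto)
qed

end

context orth begin

lemma gam_limpt: "gam (1/2) islimpt gam ` {0..1}"
  unfolding islimpt_approachable
proof (intro allI impI)
  fix e :: real assume e: "e > 0"
  let ?x = "gam (1/2 + min (e/2) (1/4))"
  have "?x \<in> gam ` {0..1}" by (intro imageI) (use e in \<open>auto simp: min_def\<close>)
  moreover have "?x \<noteq> gam (1/2)" using e by (simp add: gam_def)
  moreover have "dist ?x (gam (1/2)) < e" using e by (simp add: gam_def dist_norm)
  ultimately show "\<exists>x'\<in>gam ` {0..1}. x' \<noteq> gam (1/2) \<and> dist x' (gam (1/2)) < e" by blast
qed

lemma cnj_S0: "p \<in> S0 \<Longrightarrow> cnj p + \<tau> \<in> S0"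
  by (simp add: S0_def Im_tau)

lemma refl_S0:
  assumes p: "p \<in> S0"
  shows "\<pi> (cnj p + \<tau>) = cnj (\<pi> p)"
proof -
  define S1 where "S1 = {u. u + \<tau> \<in> S0}"
  have S1o: "open S1"
  proof -
    have "S1 = (\<lambda>u. u + \<tau>) -` S0" by (auto simp: S1_def)
    then show ?thesis using continuous_open_vimage[OF S0_open, of "\<lambda>u. u + \<tau>"] by (simp add: continuous_intros)
  qed
  have psi: "(\<lambda>u. \<pi> (u - (- \<tau>))) holomorphic_on S1"
  proof (rule hol_of_diff)
    fix u assume "u \<in> S1"
    then have "u - (- \<tau>) \<in> S0" by (simp add: S1_def)
    then have "\<pi> field_differentiable at (u - (- \<tau>))"
      using pi_hol_S0 S0_open holomorphic_on_imp_differentiable_at by blast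
    then show "(\<lambda>u. \<pi> (u - (- \<tau>))) field_differentiable at u" by (rule fd_shift)
  qed
  have "fs (\<lambda>u. \<pi> (u - (- \<tau>))) holomorphic_on {p. cnj p \<in> S1}" by (rule hol_fs[OF psi S1o])
  then have h2: "fs (\<lambda>u. \<pi> (u - (- \<tau>))) holomorphic_on S0"
    by (rule holomorphic_on_subset) (auto simp: S1_def cnj_S0)
  define \<Delta> where "\<Delta> = (\<lambda>p. \<pi> p - fs (\<lambda>u. \<pi> (u - (- \<tau>))) p)"
  have Dh: "\<Delta> holomorphic_on S0" unfolding \<Delta>_def using pi_hol_S0 h2 by (rule holomorphic_on_diff)
  have gsub: "gam ` {0..1} \<subseteq> S0" using gam_S0 by auto
  have Dz: "\<Delta> z = 0" if zin: "z \<in> gam ` {0..1}" for z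
  proof -
    obtain s where s: "s \<in> {0..1}" "z = gam s" using zin by blast
    have "cnj (gam s) + \<tau> = gam s" unfolding gam_def by (simp add: complex_eq_iff tau_eq)
    then show ?thesis using pi_real[OF s(1)] s(2) by (simp add: \<Delta>_def fs_def)
  qed
  have "\<Delta> p = 0"
    by (rule analytic_continuation[OF Dh S0_open S0_connected gsub gam_S0 gam_limpt Dz p])
  then show ?thesis by (simp add: \<Delta>_def fs_def)
qed

lemma Ints_small: "(x::real) \<in> \<int> \<Longrightarrow> -1 < x \<Longrightarrow> x < 1 \<Longrightarrow> x = 0"
proof -
  assume a: "x \<in> \<int>" "-1 < x" "x < 1"
  obtain k where k: "x = of_int k" using a(1) by (auto elim: Ints_cases)
  then have "-1 < k" "k < 1" using a by simp_all
  then have "k = 0" by simp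
  then show "x = 0" using k by simp
qed

lemma S0_not_lattice: "p \<in> S0 \<Longrightarrow> p \<notin> lattice \<tau>"
  using S0_not_PS by (auto simp: PS_eq tr_def)

lemma Lser_cnj_diff:
  assumes X: "X \<noteq> 0"
  shows "Lser QQ X - Lser QQ (cnj X) = \<i> * of_real (2 * Im (Lser QQ X))"
  using Lser_cnj[OF QQ_gt1 X] by (simp add: complex_eq_iff)

lemma caseL:
  assumes zS: "z \<in> S0" and zh: "Im z \<noteq> t / 2" and r: "r > 0" and q: "q holomorphic_on ball z r"
    and e: "\<forall>u\<in>ball z r - {z}. u \<notin> PS \<and> \<pi> u = (u - z)^2 * q u"
  shows False
proof -
  define b where "b = cnj z + \<tau>"
  have bS: "b \<in> S0" using cnj_S0[OF zS] by (simp add: b_def)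
  have zl: "z \<notin> lattice \<tau>" and bl: "b \<notin> lattice \<tau>" using S0_not_lattice zS bS by auto
  have Imb: "Im b = t - Im z" by (simp add: b_def Im_tau)
  have zt: "0 < Im z" "Im z < t" using zS by (auto simp: S0_def)
  have zb: "z \<notin> tr \<tau> b"
  proof
    assume "z \<in> tr \<tau> b"
    then have "Im (z - b) / t \<in> \<int>" by (simp add: tr_def lattice_iff)
    moreover have "Im (z - b) / t = (2 * Im z - t) / t" using Imb by simp
    moreover have "-1 < (2 * Im z - t) / t" "(2 * Im z - t) / t < 1" using zt t_pos by (simp_all add: field_simps)
    ultimately have "(2 * Im z - t) / t = 0" using Ints_small by metis
    then show False using zh t_pos by (simp add: field_simps)
  qed
  have bz: "b \<notin> tr \<tau> z"
  proof
    assume "b \<in> tr \<tau> z"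
    then have "b - z \<in> lattice \<tau>" by (simp add: tr_def)
    from lattice_uminus[OF this] have "z - b \<in> lattice \<tau>" by simp
    with zb show False by (simp add: tr_def)
  qed
  have zP: "z \<notin> PS" using S0_not_PS zS by blast
  have piz: "\<pi> z = 0" by (rule pi_zero_factor[OF zP r q e])
  have pib: "\<pi> b = 0" using refl_S0[OF zS] piz by (simp add: b_def)
  obtain rb where rb: "rb > 0" "ball b rb \<subseteq> S0" using open_contains_ball_eq[OF S0_open] bS by blast
  have pih: "\<pi> holomorphic_on ball b rb" using pi_hol_S0 rb(2) by (rule holomorphic_on_subset)
  define qb where "qb = (\<lambda>u. if u = b then deriv \<pi> b else (\<pi> u - \<pi> b) / (u - b))"
  have qbh: "qb holomorphic_on ball b rb" unfolding qb_def by (rule pole_lemma[OF pih]) (use rb in simp)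
  have eb: "\<pi> u = (u - b)^1 * qb u" if "u \<noteq> b" for u using that pib by (simp add: qb_def)
  define Z0 where "Z0 = tr \<tau> z \<union> tr \<tau> b"
  define h where "h = (\<lambda>p. Lf z b p - Lf z b 0)"
  have Zs: "\<And>p l. l \<in> lattice \<tau> \<Longrightarrow> p + l \<in> Z0 \<longleftrightarrow> p \<in> Z0" unfolding Z0_def using tr_shift by blast
  have Zc: "closed Z0" unfolding Z0_def by (intro closed_Un tr_closed)
  have Ziso: "\<And>x. eventually (\<lambda>p. p \<notin> Z0) (at x)"
    unfolding Z0_def using eventually_conj[OF ev_not_tr ev_not_tr] by simp
  have Zl: "\<And>l. l \<in> lattice \<tau> \<Longrightarrow> l \<notin> Z0" unfolding Z0_def using not_tr_lattice zl bl by blast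
  have hd: "\<And>p. p \<notin> Z0 \<Longrightarrow> h field_differentiable at p"
    unfolding h_def Z0_def by (intro field_differentiable_diff Lf_diff field_differentiable_const) auto
  have hp: "\<And>p. p \<notin> Z0 \<Longrightarrow> h (p + 1) = h p \<and> h (p + \<tau>) = h p"
    unfolding h_def Z0_def using Lf_per by simp
  have hper: "\<And>p l. p \<notin> Z0 \<Longrightarrow> l \<in> lattice \<tau> \<Longrightarrow> h (p + l) = h p"
    by (rule lat_periodic[where T = "- Z0"]) (use Zs hp in auto)
  have h0: "h 0 = 0" by (simp add: h_def)
  obtain rzb where rzb: "rzb > 0" "ball z rzb \<subseteq> - tr \<tau> b"
    using open_contains_ball_eq[of "- tr \<tau> b"] tr_closed zb by (metis ComplI open_Compl)
  obtain rbz where rbz: "rbz > 0" "ball b rbz \<subseteq> - tr \<tau> z"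
    using open_contains_ball_eq[of "- tr \<tau> z"] tr_closed bz by (metis ComplI open_Compl)
  define r1 where "r1 = min r (min (min 1 t) rzb)"
  have r1: "r1 > 0" using r t_pos rzb by (simp add: r1_def)
  have q1: "q holomorphic_on ball z r1" using q by (rule holomorphic_on_subset) (auto simp: r1_def)
  have iso1: "\<And>u. u \<in> ball z r1 - {z} \<Longrightarrow> u \<notin> Z0"
    using isolated_ball[of z z] rzb(2) by (auto simp: Z0_def r1_def tr_def lattice_0)
  define r2 where "r2 = min rb (min (min 1 t) rbz)"
  have r2: "r2 > 0" using rb t_pos rbz by (simp add: r2_def)
  have q2: "qb holomorphic_on ball b r2" using qbh by (rule holomorphic_on_subset) (auto simp: r2_def)
  have iso2: "\<And>u. u \<in> ball b r2 - {b} \<Longrightarrow> u \<notin> Z0"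
    using isolated_ball[of b b] rbz(2) by (auto simp: Z0_def r2_def tr_def lattice_0)
  have notPS2: "\<And>u. u \<in> ball b r2 \<Longrightarrow> u \<notin> PS" using rb(2) S0_not_PS by (auto simp: r2_def)
  have lim1: "((\<lambda>u. (u - z)^2 * h u) \<longlongrightarrow> 0 * (1 / of_real cc) - 0 * Lf z b 0) (at z)"
  proof -
    have Z: "((\<lambda>u. u - z) \<longlongrightarrow> z - z) (at z)" by (intro tendsto_intros)
    have Z2: "((\<lambda>u. (u - z)^2) \<longlongrightarrow> (z - z)^2) (at z)" by (intro tendsto_intros)
    have "((\<lambda>u. (u - z) * ((u - z) * Lf z b u) - (u - z)^2 * Lf z b 0) \<longlongrightarrow> (z - z) * (1 / of_real cc) - (z - z)^2 * Lf z b 0) (at z)"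
      by (intro tendsto_intros Lf_lim_a[OF zb] Z Z2)
    then show ?thesis by (simp add: h_def algebra_simps power2_eq_square)
  qed
  have lim2: "((\<lambda>u. (u - b)^1 * h u) \<longlongrightarrow> - (1 / of_real cc) - 0 * Lf z b 0) (at b)"
  proof -
    have Z: "((\<lambda>u. u - b) \<longlongrightarrow> b - b) (at b)" by (intro tendsto_intros)
    have "((\<lambda>u. (u - b) * Lf z b u - (u - b) * Lf z b 0) \<longlongrightarrow> - (1 / of_real cc) - (b - b) * Lf z b 0) (at b)"
      by (intro tendsto_intros Lf_lim_b[OF bz] Z)
    then show ?thesis by (simp add: h_def algebra_simps)
  qed
  obtain F1 where F1: "F1 holomorphic_on ball z r1" and F1e: "\<forall>u\<in>ball z r1 - {z}. \<pi> u * h u = F1 u"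
    using ext_local[OF r1 q1 _ _ lim1] e iso1 hd by (auto simp: r1_def)
  obtain F2 where F2: "F2 holomorphic_on ball b r2" and F2e: "\<forall>u\<in>ball b r2 - {b}. \<pi> u * h u = F2 u"
    using ext_local[OF r2 q2 _ _ lim2] eb iso2 hd by auto
  have base1: "\<forall>u\<in>ball z r1 - {z}. u \<notin> Z0 \<and> u \<notin> PS \<and> \<pi> u * h u = F1 u"
    using iso1 e F1e by (auto simp: r1_def)
  have base2: "\<forall>u\<in>ball b r2 - {b}. u \<notin> Z0 \<and> u \<notin> PS \<and> \<pi> u * h u = F2 u"
    using iso2 notPS2 F2e by auto
  have ext: "\<exists>r>0. \<exists>F. F holomorphic_on ball x r \<and> (\<forall>u\<in>ball x r - {x}. u \<notin> Z0 \<and> u \<notin> PS \<and> \<pi> u * h u = F u)"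
    if x: "x \<in> Z0" for x
  proof (cases "x \<in> tr \<tau> z")
    case True
    have l: "x - z \<in> lattice \<tau>" using True by (simp add: tr_def)
    from ext_trans[OF Zs hper r1 F1 base1 l] show ?thesis by simp
  next
    case False
    then have "x \<in> tr \<tau> b" using x by (simp add: Z0_def)
    then have l: "x - b \<in> lattice \<tau>" by (simp add: tr_def)
    from ext_trans[OF Zs hper r2 F2 base2 l] show ?thesis by simp
  qed
  define f where "f = (\<lambda>p. if p \<in> Z0 then Lim (at p) (\<lambda>u. \<pi> u * h u) else \<pi> p * h p)"
  have fsp: "sec_space \<tau> d (n - 1) f" unfolding f_def
    by (rule GEN[OF Zc Zs Ziso Zl hd hp h0 ext])
  define \<theta> where "\<theta> = cc * Im z"
  have th: "0 < \<theta>" "\<theta> < 2 * pi" "\<theta> \<noteq> pi"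
  proof -
    show "0 < \<theta>" using zt cc_pos by (simp add: \<theta>_def)
    have "cc * Im z < cc * t" using zt cc_pos by simp
    then show "\<theta> < 2 * pi" using cc_t by (simp add: \<theta>_def)
    show "\<theta> \<noteq> pi"
    proof
      assume "\<theta> = pi"
      then have "cc * Im z = cc * (t / 2)" using cc_half by (simp add: \<theta>_def)
      then show False using zh cc_pos by simp
    qed
  qed
  have sin_nz: "sin \<theta> \<noteq> 0"
  proof
    assume "sin \<theta> = 0"
    then obtain k :: int where k: "\<theta> = of_int k * pi" using sin_zero_iff_int2 by blast
    have k1: "0 < k" using k th(1) pi_gt_zero by (simp add: zero_less_mult_iff)
    have k2: "k < 2" using k th(2) pi_gt_zero by (simp add: mult_less_cancel_right)
    have k3: "k \<noteq> 1" using k th(3) by auto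
    from k1 k2 k3 show False by presburger
  qed
  have gZ: "gam s \<notin> Z0" for s
  proof
    assume "gam s \<in> Z0"
    then have "Im (gam s - z) / t \<in> \<int> \<or> Im (gam s - b) / t \<in> \<int>" by (auto simp: Z0_def tr_def lattice_iff)
    moreover have "Im (gam s - z) / t = (t / 2 - Im z) / t" "Im (gam s - b) / t = (Im z - t / 2) / t"
      using Imb by (simp_all add: Im_gam)
    moreover have "-1 < (t / 2 - Im z) / t" "(t / 2 - Im z) / t < 1" "-1 < (Im z - t / 2) / t" "(Im z - t / 2) / t < 1"
      using zt t_pos by (simp_all add: field_simps)
    ultimately have "(t / 2 - Im z) / t = 0 \<or> (Im z - t / 2) / t = 0" using Ints_small by metis
    then show False using zh t_pos by (auto simp: field_simps)
  qed
  have Lform: "Lf z b p = \<i> * of_real (2 * Im (Lser QQ (Af z p)))" if "cnj p = p \<or> cnj p = p - \<tau>" for p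
  proof -
    have "Af b p = Af (cnj z) p" by (simp add: b_def Af_shift_a)
    also have "\<dots> = Af (cnj z) (cnj p)"
    proof (cases "cnj p = p")
      case True then show ?thesis by simp
    next
      case False
      then have "cnj p = p - \<tau>" using that by simp
      then show ?thesis using A_addtau[of "cnj z" "p - \<tau>"] by simp
    qed
    also have "\<dots> = cnj (Af z p)" by (simp add: cnj_Af)
    finally have "Af b p = cnj (Af z p)" .
    then show ?thesis using Lser_cnj_diff[OF A_ne0] by (simp add: Lf_def)
  qed
  have ImAg: "Im (Af z (gam s)) = exp (cc * Re (gam s - z)) * sin \<theta>" for s
  proof -
    have "cc * Im (gam s - z) = pi - \<theta>" using cc_half by (simp add: Im_gam \<theta>_def algebra_simps)
    then show ?thesis by (simp add: Im_Af)
  qed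
  have ImA0: "Im (Af z 0) = - (exp (cc * Re (0 - z)) * sin \<theta>)"
  proof -
    have "cc * Im (0 - z) = - \<theta>" by (simp add: \<theta>_def)
    then show ?thesis by (simp add: Im_Af)
  qed
  define \<kappa> where "\<kappa> = (if sin \<theta> > 0 then \<i> else - \<i>)"
  have hsign: "\<exists>c>0. \<kappa> * h (gam s) = of_real c" for s
  proof -
    have cg: "cnj (gam s) = gam s - \<tau>" unfolding gam_def by (simp add: complex_eq_iff tau_eq)
    have hv: "h (gam s) = \<i> * of_real (2 * Im (Lser QQ (Af z (gam s))) - 2 * Im (Lser QQ (Af z 0)))"
      using Lform[of "gam s"] Lform[of 0] cg by (simp add: h_def algebra_simps)
    show ?thesis
    proof (cases "sin \<theta> > 0")
      case True
      have "Im (Af z (gam s)) > 0" using True by (simp add: ImAg)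
      then have a: "Im (Lser QQ (Af z (gam s))) < 0" by (rule Lser_Im_neg[OF QQ_gt1])
      have "Im (Af z 0) < 0" using True by (simp add: ImA0)
      then have b: "Im (Lser QQ (Af z 0)) > 0" by (rule Lser_Im_pos[OF QQ_gt1])
      have "\<kappa> * h (gam s) = of_real (- (2 * Im (Lser QQ (Af z (gam s))) - 2 * Im (Lser QQ (Af z 0))))"
        using True by (simp add: hv \<kappa>_def)
      then show ?thesis using a b by (intro exI[of _ "- (2 * Im (Lser QQ (Af z (gam s))) - 2 * Im (Lser QQ (Af z 0)))"]) simp
    next
      case False
      then have F: "sin \<theta> < 0" using sin_nz by simp
      have "Im (Af z (gam s)) < 0" using F by (simp add: ImAg mult_pos_neg)
      then have a: "Im (Lser QQ (Af z (gam s))) > 0" by (rule Lser_Im_pos[OF QQ_gt1])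
      have "Im (Af z 0) > 0" using F by (simp add: ImA0 mult_pos_neg)
      then have b: "Im (Lser QQ (Af z 0)) < 0" by (rule Lser_Im_neg[OF QQ_gt1])
      have "\<kappa> * h (gam s) = of_real (2 * Im (Lser QQ (Af z (gam s))) - 2 * Im (Lser QQ (Af z 0)))"
        using False by (simp add: hv \<kappa>_def)
      then show ?thesis using a b by (intro exI[of _ "2 * Im (Lser QQ (Af z (gam s))) - 2 * Im (Lser QQ (Af z 0))"]) simp
    qed
  qed
  have conds: "0 \<le> Re (\<kappa> * (\<pi> (gam s) * f (gam s) * exp (w (gam s))))
      \<and> (Re (\<kappa> * (\<pi> (gam s) * f (gam s) * exp (w (gam s)))) = 0 \<longrightarrow> \<pi> (gam s) = 0)"
    if s: "s \<in> {0..1}" for s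
  proof -
    have fv: "f (gam s) = \<pi> (gam s) * h (gam s)" using gZ by (simp add: f_def)
    have P: "Im (\<pi> (gam s)) = 0" using pi_real[OF s] by (metis Reals_cnj_iff complex_is_Real_iff)
    obtain c where c: "c > 0" "\<kappa> * h (gam s) = of_real c" using hsign by blast
    have E: "exp (w (gam s)) = of_real (exp (Re (w (gam s))))" by (rule exp_w_real)
    show ?thesis unfolding fv using sign_gen[OF P c(2) c(1) E] by simp
  qed
  show False
    by (rule CONTRA[OF fsp, of \<kappa>]) (use conds in auto)
qed

lemma main: "is_zero_at \<pi> z \<Longrightarrow> simple_zero_at \<pi> z"
proof (rule ccontr)
  assume Z: "is_zero_at \<pi> z" and NS: "\<not> simple_zero_at \<pi> z"
  obtain r q where r: "r > 0" and q: "q holomorphic_on ball z r"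
    and e: "\<forall>u\<in>ball z r - {z}. u \<notin> PS \<and> \<pi> u = (u - z)^2 * q u"
    using double_zero[OF Z NS] by blast
  have zl: "z \<notin> lattice \<tau>" by (rule zero_not_lattice[OF Z])
  define k where "k = \<lfloor>Im z / t\<rfloor>"
  define l0 where "l0 = of_int (- k) * \<tau>"
  have l0: "l0 \<in> lattice \<tau>" using lattice_intro[of 0 "- k"] by (simp add: l0_def)
  obtain q' where q': "q' holomorphic_on ball (z + l0) r"
    and e': "\<forall>u\<in>ball (z + l0) r - {z + l0}. u \<notin> PS \<and> \<pi> u = (u - (z + l0))^2 * q' u"
    using factor_shift[OF r q e l0] by blast
  have zl': "z + l0 \<notin> lattice \<tau>"
  proof
    assume "z + l0 \<in> lattice \<tau>"
    from lattice_diff[OF this l0] zl show False by simp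
  qed
  have Imz': "Im (z + l0) = Im z - of_int k * t" by (simp add: l0_def tau_eq)
  have fl: "of_int k \<le> Im z / t" "Im z / t < of_int k + 1" unfolding k_def by linarith+
  have b1: "0 \<le> Im (z + l0)" unfolding Imz' using fl(1) t_pos by (simp add: field_simps)
  have b2: "Im (z + l0) < t" unfolding Imz' using fl(2) t_pos by (simp add: field_simps)
  show False
  proof (cases "Im (z + l0) = 0 \<or> Im (z + l0) = t / 2")
    case True
    show False by (rule caseK[OF zl' r q' e' True])
  next
    case False
    then have "z + l0 \<in> S0" "Im (z + l0) \<noteq> t / 2" using b1 b2 by (auto simp: S0_def)
    then show False by (rule caseL[OF _ _ r q' e'])
  qed
qed

end

theorem corollary2p4:
  fixes \<tau> :: complex and d :: real and \<delta> :: real and w :: "complex \<Rightarrow> complex"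
    and n :: nat and \<pi> :: "complex \<Rightarrow> complex"
  assumes tau: "Re \<tau> = 0" "Im \<tau> > 0"
    and D: "0 < d" "d < 1"
    and delta: "\<delta> > 0"
    and w_hol: "w holomorphic_on {p. \<bar>Im p - Im \<tau> / 2\<bar> < \<delta>}"
    and w_per: "\<forall>p. \<bar>Im p - Im \<tau> / 2\<bar> < \<delta> \<longrightarrow> w (p + 1) = w p"
    and w_real: "\<forall>s::real. w (\<tau> / 2 + of_real s) \<in> \<real>"
    and n: "n \<ge> 1"
    and pi_space: "sec_space \<tau> d n \<pi>"
    and pi_monic: "(\<lambda>p. p ^ n * \<pi> p - 1) \<in> O[at 0](\<lambda>p. p)"
    and pi_orth: "\<forall>f. sec_space \<tau> d (n - 1) f \<longrightarrow>
        contour_integral (linepath (\<tau> / 2) (\<tau> / 2 + 1)) (\<lambda>p. \<pi> p * f p * exp (w p)) = 0"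
  shows "\<forall>z. is_zero_at \<pi> z \<longrightarrow> simple_zero_at \<pi> z"
proof -
  have te: "\<tau> = \<i> * of_real (Im \<tau>)" using tau(1) by (simp add: complex_eq_iff)
  interpret orth \<tau> "Im \<tau>" d n \<pi> w \<delta>
    by unfold_locales (use te tau D n pi_space pi_monic delta w_hol w_real pi_orth in auto)
  show ?thesis using main by blast
qed

end
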